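(* Let $X_1=X_2=X_3=\mathbb{N}$ (discrete topology). For $n\in\mathbb{N}$ let $A_n=\{(n+1,n,n),(n,n+1,n),(n,n,n+1)\}$. Let $\mu_p$ be the probability measure on $\mathbb{N}^3$ with $\mu_p(x)=\frac{2}{(\pi n)^2}$ if $x\in A_n$ and $\mu_p(x)=0$ if $x\notin\bigcup_nA_n$, and let $\mu_\varepsilon(n_1,n_2,n_3)=2^{-n_1-n_2-n_3}$. Let $c:\mathbb{N}^3\to\{0,1\}$, $c=1$ on $\bigcup_nA_n$ and $c=0$ elsewhere. Then there exists $\alpha_0\in(0,1)$ such that for $\mu=(1-\alpha_0)\mu_p+\alpha_0\mu_\varepsilon$ and $\mu_{ij}=\mathrm{Pr}_{ij}(\mu)$: (i) $\mu$ is equivalent but not uniformly equivalent to $\mu_1\otimes\mu_2\otimes\mu_3$, where $\mu_i=\mathrm{Pr}_i(\mu)$; (ii) there is no tuple of functions $f_{ij}:\mathbb{N}^2\to[-\infty,+\infty)$, $f_{ij}\in L^1(\mu_{ij})$, with $f_{12}(n_1,n_2)+f_{13}(n_1,n_3)+f_{23}(n_2,n_3)\le c(n_1,n_2,n_3)$ for all $(n_1,n_2,n_3)$ that attains the supremum of $\sum_{i<j}\int f_{ij}\,d\mu_{ij}$ over all such tuples; i.e. the dual $(3,2)$-problem has no solution.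
   Context: $\mathrm{Pr}_{ij}$ and $\mathrm{Pr}_i$ denote the coordinate projections of $\mathbb{N}^3$ onto $\mathbb{N}^2$ (coordinates $i,j$) and onto $\mathbb{N}$ (coordinate $i$). Two measures are equivalent if mutually absolutely continuous, and uniformly equivalent if one has a density with respect to the other bounded above and below by positive constants. *)

theory Defs
  imports "HOL-Analysis.Analysis"
begin

text \<open>Here \<open>\<nat>\<close> of the paper is the set of positive integers (so that
  \<open>\<mu>\<^sub>p\<close> and \<open>\<mu>\<^sub>\<epsilon>\<close> are probability measures).
  We work on the type \<open>nat \<times> nat \<times> nat\<close> with the discrete (counting)
  sigma-algebra; all measures below give zero mass to points with a zero coordinate.\<close>

definition pos3 :: "(nat \<times> nat \<times> nat) set" where
  "pos3 = {(a,b,c). a \<ge> 1 \<and> b \<ge> 1 \<and> c \<ge> 1}"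

definition A :: "nat \<Rightarrow> (nat \<times> nat \<times> nat) set" where
  "A n = {(n+1, n, n), (n, n+1, n), (n, n, n+1)}"

text \<open>point weights of \<open>\<mu>\<^sub>p\<close>: \<open>2/(\<pi> n)\<^sup>2\<close> on \<open>A n\<close> (n \<ge> 1), 0 off \<open>\<Union>\<^sub>n A n\<close>
  (the sets \<open>A n\<close> are pairwise disjoint, so the sum has at most one term)\<close>
definition wp :: "nat \<times> nat \<times> nat \<Rightarrow> real" where
  "wp x = (\<Sum>n\<in>{n. n \<ge> 1 \<and> x \<in> A n}. 2 / (pi * real n)^2)"

definition weps :: "nat \<times> nat \<times> nat \<Rightarrow> real" where
  "weps x = (if x \<in> pos3 then (case x of (n1,n2,n3) \<Rightarrow> 2 powr (- real (n1+n2+n3))) else 0)"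

definition mu_p :: "(nat \<times> nat \<times> nat) measure" where
  "mu_p = density (count_space UNIV) (\<lambda>x. ennreal (wp x))"

definition mu_eps :: "(nat \<times> nat \<times> nat) measure" where
  "mu_eps = density (count_space UNIV) (\<lambda>x. ennreal (weps x))"

definition mu_mix :: "real \<Rightarrow> (nat \<times> nat \<times> nat) measure" where
  "mu_mix \<alpha> = density (count_space UNIV) (\<lambda>x. ennreal ((1 - \<alpha>) * wp x + \<alpha> * weps x))"

definition cost :: "nat \<times> nat \<times> nat \<Rightarrow> ereal" where
  "cost x = (if \<exists>n\<ge>1. x \<in> A n then 1 else 0)"

definition pr1 :: "nat \<times> nat \<times> nat \<Rightarrow> nat" where "pr1 x = fst x"
definition pr2 :: "nat \<times> nat \<times> nat \<Rightarrow> nat" where "pr2 x = fst (snd x)"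
definition pr3 :: "nat \<times> nat \<times> nat \<Rightarrow> nat" where "pr3 x = snd (snd x)"
definition pr12 :: "nat \<times> nat \<times> nat \<Rightarrow> nat \<times> nat" where "pr12 x = (pr1 x, pr2 x)"
definition pr13 :: "nat \<times> nat \<times> nat \<Rightarrow> nat \<times> nat" where "pr13 x = (pr1 x, pr3 x)"
definition pr23 :: "nat \<times> nat \<times> nat \<Rightarrow> nat \<times> nat" where "pr23 x = (pr2 x, pr3 x)"

definition marg1 :: "(nat \<times> nat \<times> nat) measure \<Rightarrow> nat measure" where
  "marg1 M = distr M (count_space UNIV) pr1"
definition marg2 :: "(nat \<times> nat \<times> nat) measure \<Rightarrow> nat measure" where
  "marg2 M = distr M (count_space UNIV) pr2"
definition marg3 :: "(nat \<times> nat \<times> nat) measure \<Rightarrow> nat measure" where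
  "marg3 M = distr M (count_space UNIV) pr3"
definition marg12 :: "(nat \<times> nat \<times> nat) measure \<Rightarrow> (nat \<times> nat) measure" where
  "marg12 M = distr M (count_space UNIV) pr12"
definition marg13 :: "(nat \<times> nat \<times> nat) measure \<Rightarrow> (nat \<times> nat) measure" where
  "marg13 M = distr M (count_space UNIV) pr13"
definition marg23 :: "(nat \<times> nat \<times> nat) measure \<Rightarrow> (nat \<times> nat) measure" where
  "marg23 M = distr M (count_space UNIV) pr23"

definition equiv_measures :: "'a measure \<Rightarrow> 'a measure \<Rightarrow> bool" where
  "equiv_measures M N \<longleftrightarrow> absolutely_continuous M N \<and> absolutely_continuous N M"

definition bounded_density :: "'a measure \<Rightarrow> 'a measure \<Rightarrow> bool" where
  "bounded_density M N \<longleftrightarrow> (\<exists>g a b. 0 < a \<and> a \<le> b \<and> g \<in> borel_measurable N \<and>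
      (\<forall>x\<in>space N. a \<le> g x \<and> g x \<le> b) \<and> M = density N (\<lambda>x. ennreal (g x)))"

definition unif_equiv_measures :: "'a measure \<Rightarrow> 'a measure \<Rightarrow> bool" where
  "unif_equiv_measures M N \<longleftrightarrow> bounded_density M N \<or> bounded_density N M"

definition ereal_L1 :: "'a measure \<Rightarrow> ('a \<Rightarrow> ereal) \<Rightarrow> bool" where
  "ereal_L1 M f \<longleftrightarrow> f \<in> borel_measurable M \<and> (\<forall>x\<in>space M. f x \<noteq> \<infinity>) \<and>
      (\<integral>\<^sup>+ x. e2ennreal \<bar>f x\<bar> \<partial>M) < \<infinity>"

text \<open>integral of such a function (finite a.e., so the real part suffices)\<close>
definition ereal_int :: "'a measure \<Rightarrow> ('a \<Rightarrow> ereal) \<Rightarrow> real" where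
  "ereal_int M f = integral\<^sup>L M (\<lambda>x. real_of_ereal (f x))"

definition dual_admissible ::
  "(nat \<times> nat \<times> nat) measure \<Rightarrow> (nat \<times> nat \<Rightarrow> ereal) \<Rightarrow> (nat \<times> nat \<Rightarrow> ereal) \<Rightarrow> (nat \<times> nat \<Rightarrow> ereal) \<Rightarrow> bool" where
  "dual_admissible M f12 f13 f23 \<longleftrightarrow>
     ereal_L1 (marg12 M) f12 \<and> ereal_L1 (marg13 M) f13 \<and> ereal_L1 (marg23 M) f23 \<and>
     (\<forall>n1 n2 n3. (n1, n2, n3) \<in> pos3 \<longrightarrow> f12 (n1, n2) + f13 (n1, n3) + f23 (n2, n3) \<le> cost (n1, n2, n3))"

definition dual_value ::
  "(nat \<times> nat \<times> nat) measure \<Rightarrow> (nat \<times> nat \<Rightarrow> ereal) \<Rightarrow> (nat \<times> nat \<Rightarrow> ereal) \<Rightarrow> (nat \<times> nat \<Rightarrow> ereal) \<Rightarrow> real" where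
  "dual_value M f12 f13 f23 = ereal_int (marg12 M) f12 + ereal_int (marg13 M) f13 + ereal_int (marg23 M) f23"

end

theory Submission
  imports Defs
begin


definition a0 :: real where "a0 = 1/1000"

definition ee :: "nat \<Rightarrow> real" where "ee k = (if k \<ge> 1 then (1/2)^k else 0)"

definition w :: "nat \<times> nat \<times> nat \<Rightarrow> real" where
  "w x = (1 - a0) * wp x + a0 * weps x"

lemma A_mem: "x \<in> A m \<longleftrightarrow> x = (m+1,m,m) \<or> x = (m,m+1,m) \<or> x = (m,m,m+1)"
  by (auto simp: A_def)

lemma A_unique: "x \<in> A m \<Longrightarrow> x \<in> A m' \<Longrightarrow> m = m'"
  by (auto simp: A_def)

lemma wp_A: "n \<ge> 1 \<Longrightarrow> x \<in> A n \<Longrightarrow> wp x = 2 / (pi * real n)^2"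
proof -
  assume h: "n \<ge> 1" "x \<in> A n"
  have "{m. m \<ge> 1 \<and> x \<in> A m} = {n}" using h A_unique by blast
  thus ?thesis by (simp add: wp_def)
qed

lemma wp_notA: "(\<And>m. m \<ge> 1 \<Longrightarrow> x \<notin> A m) \<Longrightarrow> wp x = 0"
proof -
  assume h: "\<And>m. m \<ge> 1 \<Longrightarrow> x \<notin> A m"
  have e: "{m. m \<ge> 1 \<and> x \<in> A m} = {}" using h by blast
  show ?thesis unfolding wp_def by (simp only: e sum.empty)
qed

lemma wp_nonneg: "wp x \<ge> 0"
  unfolding wp_def by (intro sum_nonneg) auto

lemma weps_eq: "weps (a,b,c) = ee a * ee b * ee c"
proof -
  have e1: "(2::real) powr (real (a+b+c)) = 2^(a+b+c)" by (rule powr_realpow) simp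
  have "(2::real) powr (- real (a+b+c)) = inverse (2^(a+b+c))"
    by (simp only: powr_minus e1)
  also have "\<dots> = (1/2)^a * (1/2)^b * (1/2)^c"
    by (simp only: power_add inverse_mult_distrib power_one_over inverse_eq_divide divide_divide_eq_left' times_divide_eq_right mult_1_right divide_divide_eq_left mult_ac)
  finally have "(2::real) powr (- real (a+b+c)) = (1/2)^a * (1/2)^b * (1/2)^c" .
  thus ?thesis by (simp add: weps_def ee_def pos3_def)
qed

lemma ee_nonneg: "ee k \<ge> 0" by (simp add: ee_def)

lemma weps_nonneg: "weps x \<ge> 0"
  by (cases x) (auto simp: weps_eq ee_nonneg)

lemma a0_pos: "0 < a0" and a0_lt1: "a0 < 1" by (simp_all add: a0_def)

lemma w_nonneg: "w x \<ge> 0"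
  using wp_nonneg weps_nonneg a0_pos a0_lt1 unfolding w_def by simp

lemma mu_def': "mu_mix a0 = density (count_space UNIV) (\<lambda>x. ennreal (w x))"
  by (simp add: mu_mix_def w_def)

lemma space_mu[simp]: "space (mu_mix a0) = UNIV" by (simp add: mu_mix_def)
lemma sets_mu[simp]: "sets (mu_mix a0) = UNIV" by (simp add: mu_mix_def)

lemma emeasure_mu: "emeasure (mu_mix a0) E = (\<integral>\<^sup>+x. ennreal (w x) * indicator E x \<partial>count_space UNIV)"
  unfolding mu_def' by (subst emeasure_density) auto

lemma emeasure_mu_single: "emeasure (mu_mix a0) {x} = ennreal (w x)"
  unfolding emeasure_mu by (simp add: nn_integral_indicator_singleton)



lemma nn_integral_prod3:
  fixes u v z :: "nat \<Rightarrow> real"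
  assumes "\<And>k. u k \<ge> 0" "\<And>k. v k \<ge> 0" "\<And>k. z k \<ge> 0"
  shows "(\<integral>\<^sup>+x. ennreal (u (fst x) * v (fst (snd x)) * z (snd (snd x))) \<partial>count_space UNIV)
    = (\<integral>\<^sup>+a. ennreal (u a) \<partial>count_space UNIV) * (\<integral>\<^sup>+b. ennreal (v b) \<partial>count_space UNIV)
      * (\<integral>\<^sup>+c. ennreal (z c) \<partial>count_space UNIV)"
proof -
  let ?F = "\<lambda>x::nat\<times>nat\<times>nat. ennreal (u (fst x) * v (fst (snd x)) * z (snd (snd x)))"
  have "integral\<^sup>N (count_space UNIV) ?F = (\<integral>\<^sup>+a. \<integral>\<^sup>+p. ?F (a,p) \<partial>count_space UNIV \<partial>count_space UNIV)"
    by (rule nn_integral_fst_count_space[symmetric])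
  also have "\<dots> = (\<integral>\<^sup>+a. \<integral>\<^sup>+b. \<integral>\<^sup>+c. ?F (a,b,c) \<partial>count_space UNIV \<partial>count_space UNIV \<partial>count_space UNIV)"
    by (intro nn_integral_cong) (rule nn_integral_fst_count_space[symmetric])
  also have "\<dots> = (\<integral>\<^sup>+a. \<integral>\<^sup>+b. \<integral>\<^sup>+c. (ennreal (u a) * ennreal (v b)) * ennreal (z c) \<partial>count_space UNIV \<partial>count_space UNIV \<partial>count_space UNIV)"
    using assms by (intro nn_integral_cong) (simp add: ennreal_mult)
  also have "\<dots> = (\<integral>\<^sup>+a. \<integral>\<^sup>+b. ennreal (u a) * ennreal (v b) * (\<integral>\<^sup>+c. ennreal (z c) \<partial>count_space UNIV) \<partial>count_space UNIV \<partial>count_space UNIV)"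
    by (intro nn_integral_cong nn_integral_cmult) simp
  also have "\<dots> = (\<integral>\<^sup>+a. ennreal (u a) * (\<integral>\<^sup>+b. ennreal (v b) \<partial>count_space UNIV) * (\<integral>\<^sup>+c. ennreal (z c) \<partial>count_space UNIV) \<partial>count_space UNIV)"
    apply (intro nn_integral_cong)
    apply (subst nn_integral_multc, simp)
    apply (subst nn_integral_cmult, simp)
    by simp
  also have "\<dots> = (\<integral>\<^sup>+a. ennreal (u a) \<partial>count_space UNIV) * (\<integral>\<^sup>+b. ennreal (v b) \<partial>count_space UNIV)
      * (\<integral>\<^sup>+c. ennreal (z c) \<partial>count_space UNIV)"
    apply (subst nn_integral_multc, simp)
    apply (subst nn_integral_multc, simp)
    by simp
  finally show ?thesis .
qed

lemma geom_tail_sums: "(\<lambda>k. (1/2::real)^k * indicator {N..} k) sums ((1/2)^N * 2)"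
proof -
  have "(\<lambda>i. (1/2::real)^(i+N) * indicator {N..} (i+N)) = (\<lambda>i. (1/2)^N * (1/2)^i)"
    by (auto simp: power_add)
  moreover have "(\<lambda>i. (1/2::real)^N * (1/2)^i) sums ((1/2)^N * 2)"
    by (intro sums_mult) (rule geometric_sums[where c="1/2::real", simplified])
  ultimately have "(\<lambda>i. (1/2::real)^(i+N) * indicator {N..} (i+N)) sums ((1/2)^N * 2)" by simp
  moreover have "(\<Sum>i<N. (1/2::real)^i * indicator {N..} i) = 0" by simp
  ultimately show ?thesis using sums_iff_shift[of "\<lambda>k. (1/2::real)^k * indicator {N..} k" N] by simp
qed

lemma nn_integral_ennreal_sums:
  fixes f :: "nat \<Rightarrow> real"
  assumes "\<And>k. f k \<ge> 0" "f sums s"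
  shows "(\<integral>\<^sup>+k. ennreal (f k) \<partial>count_space UNIV) = ennreal s"
  using assms by (simp add: nn_integral_count_space_nat suminf_ennreal2 sums_summable sums_unique[symmetric])

lemma ee_sums: "ee sums 1"
proof -
  have "ee = (\<lambda>k. (1/2::real)^k * indicator {1..} k)"
    by (auto simp: ee_def fun_eq_iff)
  thus ?thesis using geom_tail_sums[of 1] by simp
qed

lemma ee_tail_le: "ee k * indicator {N..} k \<le> (1/2::real)^k * indicator {N..} k"
  by (auto simp: ee_def indicator_def)

lemma int_ee: "(\<integral>\<^sup>+k. ennreal (ee k) \<partial>count_space UNIV) = 1"
  using nn_integral_ennreal_sums[OF ee_nonneg ee_sums] by simp

lemma int_ee_tail: "(\<integral>\<^sup>+k. ennreal (ee k * indicator {N..} k) \<partial>count_space UNIV) \<le> ennreal ((1/2)^N * 2)"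
proof -
  have "(\<integral>\<^sup>+k. ennreal (ee k * indicator {N..} k) \<partial>count_space UNIV)
     \<le> (\<integral>\<^sup>+k. ennreal ((1/2::real)^k * indicator {N..} k) \<partial>count_space UNIV)"
    by (intro nn_integral_mono ennreal_leI ee_tail_le)
  also have "\<dots> = ennreal ((1/2)^N * 2)"
    by (rule nn_integral_ennreal_sums[OF _ geom_tail_sums]) simp
  finally show ?thesis .
qed

lemma weps_split: "weps x = ee (fst x) * ee (fst (snd x)) * ee (snd (snd x))"
  by (cases x) (simp add: weps_eq)

lemma int_weps: "(\<integral>\<^sup>+x. ennreal (weps x) \<partial>count_space UNIV) = 1"
  by (simp add: weps_split nn_integral_prod3 ee_nonneg int_ee)

definition Qmax :: "nat \<Rightarrow> (nat\<times>nat\<times>nat) set" where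
  "Qmax N = {x. fst x \<ge> N \<or> fst (snd x) \<ge> N \<or> snd (snd x) \<ge> N}"

lemma int_weps_Qmax: "(\<integral>\<^sup>+x. ennreal (weps x) * indicator (Qmax N) x \<partial>count_space UNIV) \<le> ennreal (3 * ((1/2)^N * 2))"
proof -
  let ?I = "\<lambda>k::nat. indicator {N..} k :: real"
  have "(\<integral>\<^sup>+x. ennreal (weps x) * indicator (Qmax N) x \<partial>count_space UNIV)
     \<le> (\<integral>\<^sup>+x. ennreal ((ee (fst x) * ?I (fst x)) * ee (fst (snd x)) * ee (snd (snd x)))
        + ennreal (ee (fst x) * (ee (fst (snd x)) * ?I (fst (snd x))) * ee (snd (snd x)))
        + ennreal (ee (fst x) * ee (fst (snd x)) * (ee (snd (snd x)) * ?I (snd (snd x)))) \<partial>count_space UNIV)"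
  proof (intro nn_integral_mono)
    fix x :: "nat\<times>nat\<times>nat"
    obtain a b c where x: "x = (a,b,c)" by (cases x)
    have nn: "ee a \<ge> 0" "ee b \<ge> 0" "ee c \<ge> 0" by (simp_all add: ee_nonneg)
    show "ennreal (weps x) * indicator (Qmax N) x \<le> ennreal ((ee (fst x) * ?I (fst x)) * ee (fst (snd x)) * ee (snd (snd x)))
        + ennreal (ee (fst x) * (ee (fst (snd x)) * ?I (fst (snd x))) * ee (snd (snd x)))
        + ennreal (ee (fst x) * ee (fst (snd x)) * (ee (snd (snd x)) * ?I (snd (snd x))))"
      using nn by (auto simp: x weps_eq Qmax_def indicator_def simp flip: ennreal_plus)
  qed
  also have "\<dots> = (\<integral>\<^sup>+x. ennreal ((ee (fst x) * ?I (fst x)) * ee (fst (snd x)) * ee (snd (snd x))) \<partial>count_space UNIV)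
        + (\<integral>\<^sup>+x. ennreal (ee (fst x) * (ee (fst (snd x)) * ?I (fst (snd x))) * ee (snd (snd x))) \<partial>count_space UNIV)
        + (\<integral>\<^sup>+x. ennreal (ee (fst x) * ee (fst (snd x)) * (ee (snd (snd x)) * ?I (snd (snd x)))) \<partial>count_space UNIV)"
    by (simp add: nn_integral_add)
  also have "\<dots> \<le> ennreal ((1/2)^N * 2) + ennreal ((1/2)^N * 2) + ennreal ((1/2)^N * 2)"
    by (intro add_mono; subst nn_integral_prod3; simp add: ee_nonneg int_ee int_ee_tail)
  also have "\<dots> = ennreal (3 * ((1/2)^N * 2))"
    by (simp flip: ennreal_plus)
  finally show ?thesis .
qed



definition cc :: "nat \<Rightarrow> real" where "cc m = 2 / (pi * real m)^2"

lemma cc_nonneg: "cc m \<ge> 0" by (simp add: cc_def)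

lemma cc_eq: "cc m = (2/pi^2) * inverse (real m ^ 2)"
  by (simp add: cc_def power_mult_distrib divide_inverse)

lemma summable_cc: "summable cc"
proof -
  have "summable (\<lambda>m. (2/pi^2) * inverse (real m ^ 2))"
    by (intro summable_mult inverse_power_summable) simp
  thus ?thesis by (simp add: cc_eq[abs_def])
qed

lemma wp_suminf: "ennreal (wp x) = (\<Sum>m. ennreal (cc m * indicator (A m) x))"
proof (cases "\<exists>n\<ge>1. x \<in> A n")
  case True
  then obtain n where n: "n \<ge> 1" "x \<in> A n" by blast
  have "(\<Sum>m. ennreal (cc m * indicator (A m) x)) = (\<Sum>m\<in>{n}. ennreal (cc m * indicator (A m) x))"
    by (rule suminf_finite) (use n in \<open>auto simp: indicator_def dest: A_unique[OF n(2)]\<close>)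
  also have "\<dots> = ennreal (wp x)" using n by (simp add: wp_A cc_def)
  finally show ?thesis by simp
next
  case False
  then have "wp x = 0" by (intro wp_notA) auto
  moreover have "(\<lambda>m. ennreal (cc m * indicator (A m) x)) = (\<lambda>m. 0)"
    using False by (auto simp: fun_eq_iff indicator_def cc_def) (case_tac "m = 0"; auto)
  ultimately show ?thesis by simp
qed

lemma finite_A[simp]: "finite (A m)" by (simp add: A_def)

lemma int_wp: "(\<integral>\<^sup>+x. ennreal (wp x) * indicator E x \<partial>count_space UNIV)
   = (\<Sum>m. ennreal (cc m) * of_nat (card (A m \<inter> E)))"
proof -
  have "(\<integral>\<^sup>+x. ennreal (wp x) * indicator E x \<partial>count_space UNIV)
     = (\<integral>\<^sup>+x. (\<Sum>m. ennreal (cc m * indicator (A m) x) * indicator E x) \<partial>count_space UNIV)"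
    by (simp add: wp_suminf)
  also have "\<dots> = (\<Sum>m. \<integral>\<^sup>+x. ennreal (cc m * indicator (A m) x) * indicator E x \<partial>count_space UNIV)"
    by (rule nn_integral_suminf) simp
  also have "\<dots> = (\<Sum>m. ennreal (cc m) * of_nat (card (A m \<inter> E)))"
  proof (intro suminf_cong)
    fix m
    have "(\<integral>\<^sup>+x. ennreal (cc m * indicator (A m) x) * indicator E x \<partial>count_space UNIV)
       = (\<integral>\<^sup>+x. ennreal (cc m) * indicator (A m \<inter> E) x \<partial>count_space UNIV)"
      by (intro nn_integral_cong) (auto simp: indicator_def)
    also have "\<dots> = ennreal (cc m) * of_nat (card (A m \<inter> E))"
      by (subst nn_integral_cmult_indicator) (auto simp: emeasure_count_space_finite)
    finally show "(\<integral>\<^sup>+x. ennreal (cc m * indicator (A m) x) * indicator E x \<partial>count_space UNIV)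
       = ennreal (cc m) * of_nat (card (A m \<inter> E))" .
  qed
  finally show ?thesis .
qed

lemma card_A_le: "card (A m \<inter> E) \<le> 3"
proof -
  have "card (A m \<inter> E) \<le> card (A m)" by (intro card_mono) auto
  also have "\<dots> \<le> 3" unfolding A_def by (auto simp: card_insert_if)
  finally show ?thesis .
qed

lemma card_A3: "card (A m) \<le> 3" using card_A_le[of m UNIV] by simp

lemma int_wp_finite: "(\<integral>\<^sup>+x. ennreal (wp x) \<partial>count_space UNIV) < \<infinity>"
proof -
  have "(\<integral>\<^sup>+x. ennreal (wp x) \<partial>count_space UNIV) = (\<integral>\<^sup>+x. ennreal (wp x) * indicator UNIV x \<partial>count_space UNIV)"
    by simp
  also have "\<dots> = (\<Sum>m. ennreal (cc m) * of_nat (card (A m \<inter> UNIV)))" by (rule int_wp)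
  also have "\<dots> \<le> (\<Sum>m. ennreal (cc m * 3))"
    by (intro suminf_le) (auto simp: ennreal_mult cc_nonneg card_A3 intro!: mult_left_mono)
  also have "\<dots> = ennreal (\<Sum>m. cc m * 3)"
    by (intro suminf_ennreal2) (auto simp: cc_nonneg summable_cc intro: summable_mult2)
  also have "\<dots> < \<infinity>" by simp
  finally show ?thesis .
qed

lemma pos_not_pos3_wp: "x \<notin> pos3 \<Longrightarrow> wp x = 0"
  by (rule wp_notA) (auto simp: A_def pos3_def)

lemma pos_not_pos3_weps: "x \<notin> pos3 \<Longrightarrow> weps x = 0"
  by (simp add: weps_def)

lemma w_zero: "x \<notin> pos3 \<Longrightarrow> w x = 0"
  by (simp add: w_def pos_not_pos3_wp pos_not_pos3_weps)

lemma weps_pos: "x \<in> pos3 \<Longrightarrow> weps x > 0"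
  by (cases x) (auto simp: weps_eq pos3_def ee_def)

lemma w_pos: "x \<in> pos3 \<Longrightarrow> w x > 0"
proof -
  assume "x \<in> pos3"
  hence "a0 * weps x > 0" using weps_pos a0_pos by simp
  moreover have "(1 - a0) * wp x \<ge> 0" using wp_nonneg a0_lt1 by simp
  ultimately show ?thesis by (simp add: w_def)
qed

lemma w_le: "w x \<le> wp x + weps x"
  using wp_nonneg weps_nonneg a0_pos a0_lt1 unfolding w_def
  by (smt (verit) mult_left_le_one_le)

lemma mu_finite: "emeasure (mu_mix a0) UNIV < \<infinity>"
proof -
  have "emeasure (mu_mix a0) UNIV = (\<integral>\<^sup>+x. ennreal (w x) \<partial>count_space UNIV)"
    by (simp add: emeasure_mu)
  also have "\<dots> \<le> (\<integral>\<^sup>+x. ennreal (wp x) + ennreal (weps x) \<partial>count_space UNIV)"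
    by (intro nn_integral_mono) (simp add: w_le wp_nonneg weps_nonneg flip: ennreal_plus)
  also have "\<dots> = (\<integral>\<^sup>+x. ennreal (wp x) \<partial>count_space UNIV) + (\<integral>\<^sup>+x. ennreal (weps x) \<partial>count_space UNIV)"
    by (simp add: nn_integral_add)
  also have "\<dots> < \<infinity>" using int_wp_finite int_weps by simp
  finally show ?thesis .
qed

lemma finite_mu: "finite_measure (mu_mix a0)"
  by (rule finite_measureI) (use mu_finite in simp)



abbreviation "mu \<equiv> mu_mix a0"

lemma meas_univ: "sets M = UNIV \<Longrightarrow> space N = UNIV \<Longrightarrow> f \<in> measurable M N"
  unfolding measurable_def by auto

lemma borel_univ: "sets M = UNIV \<Longrightarrow> f \<in> borel_measurable M"
  by (rule meas_univ) auto

lemma pr_simps[simp]: "pr1 (a,b,c) = a" "pr2 (a,b,c) = b" "pr3 (a,b,c) = c"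
  "pr12 (a,b,c) = (a,b)" "pr13 (a,b,c) = (a,c)" "pr23 (a,b,c) = (b,c)"
  by (simp_all add: pr1_def pr2_def pr3_def pr12_def pr13_def pr23_def)

lemma sets_marg[simp]: "sets (marg12 mu) = UNIV" "sets (marg13 mu) = UNIV" "sets (marg23 mu) = UNIV"
  "sets (marg1 mu) = UNIV" "sets (marg2 mu) = UNIV" "sets (marg3 mu) = UNIV"
  by (simp_all add: marg12_def marg13_def marg23_def marg1_def marg2_def marg3_def)

lemma space_marg[simp]: "space (marg12 mu) = UNIV" "space (marg13 mu) = UNIV" "space (marg23 mu) = UNIV"
  "space (marg1 mu) = UNIV" "space (marg2 mu) = UNIV" "space (marg3 mu) = UNIV"
  by (simp_all add: marg12_def marg13_def marg23_def marg1_def marg2_def marg3_def)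

lemma emeasure_marg:
  "emeasure (marg12 mu) E = emeasure mu (pr12 -` E)"
  "emeasure (marg13 mu) E = emeasure mu (pr13 -` E)"
  "emeasure (marg23 mu) E = emeasure mu (pr23 -` E)"
  "emeasure (marg1 mu) F = emeasure mu (pr1 -` F)"
  "emeasure (marg2 mu) F = emeasure mu (pr2 -` F)"
  "emeasure (marg3 mu) F = emeasure mu (pr3 -` F)"
  by (simp_all add: marg12_def marg13_def marg23_def marg1_def marg2_def marg3_def
      emeasure_distr meas_univ)

lemma finite_marg:
  "finite_measure (marg12 mu)" "finite_measure (marg13 mu)" "finite_measure (marg23 mu)"
  "finite_measure (marg1 mu)" "finite_measure (marg2 mu)" "finite_measure (marg3 mu)"
  using mu_finite by (auto intro!: finite_measureI simp: emeasure_marg)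

lemma marg_single_ge:
  "emeasure (marg12 mu) {(a,b)} \<ge> ennreal (w (a,b,c))"
  "emeasure (marg13 mu) {(a,c)} \<ge> ennreal (w (a,b,c))"
  "emeasure (marg23 mu) {(b,c)} \<ge> ennreal (w (a,b,c))"
  by (simp_all add: emeasure_marg flip: emeasure_mu_single; intro emeasure_mono; auto)+

lemma marg_single_pos:
  assumes "a \<ge> 1" "b \<ge> 1"
  shows "emeasure (marg12 mu) {(a,b)} > 0" "emeasure (marg13 mu) {(a,b)} > 0"
    "emeasure (marg23 mu) {(a,b)} > 0"
proof -
  have p: "w (a,b,1) > 0" "w (a,1,b) > 0" "w (1,a,b) > 0"
    using assms by (auto intro!: w_pos simp: pos3_def)
  show "emeasure (marg12 mu) {(a,b)} > 0"
    using marg_single_ge(1)[of a b 1] p(1) by (meson ennreal_less_zero_iff order_less_le_trans)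
  show "emeasure (marg13 mu) {(a,b)} > 0"
    using marg_single_ge(2)[of a 1 b] p(2) by (meson ennreal_less_zero_iff order_less_le_trans)
  show "emeasure (marg23 mu) {(a,b)} > 0"
    using marg_single_ge(3)[of 1 a b] p(3) by (meson ennreal_less_zero_iff order_less_le_trans)
qed

lemma L1_point_finite:
  assumes L: "ereal_L1 N f" and S: "sets N = UNIV" and p: "emeasure N {p} > 0"
  shows "\<bar>f p\<bar> \<noteq> \<infinity>"
proof
  assume inf: "\<bar>f p\<bar> = \<infinity>"
  have "e2ennreal \<bar>f p\<bar> * emeasure N {p} = (\<integral>\<^sup>+x. e2ennreal \<bar>f p\<bar> * indicator {p} x \<partial>N)"
    using S by (simp add: nn_integral_cmult_indicator)
  also have "\<dots> \<le> (\<integral>\<^sup>+x. e2ennreal \<bar>f x\<bar> \<partial>N)"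
    by (intro nn_integral_mono) (auto simp: indicator_def)
  also have "\<dots> < \<infinity>" using L by (simp add: ereal_L1_def)
  finally show False using inf p by (auto simp: ennreal_top_mult split: if_splits)
qed

lemma enn_real_of_ereal_le: "ennreal \<bar>real_of_ereal e\<bar> \<le> e2ennreal \<bar>e\<bar>"
  by (cases e) (auto simp: e2ennreal_ereal)

lemma enn_real_of_ereal_le2: "ennreal (real_of_ereal \<bar>e\<bar>) \<le> e2ennreal \<bar>e\<bar>"
  by (cases e) (auto simp: e2ennreal_ereal)

lemma L1_integrable:
  assumes L: "ereal_L1 N f" and S: "sets N = UNIV"
  shows "integrable N (\<lambda>x. real_of_ereal (f x))"
proof (rule integrableI_bounded)
  show "(\<lambda>x. real_of_ereal (f x)) \<in> borel_measurable N" using S by (rule borel_univ)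
  have "(\<integral>\<^sup>+x. ennreal (norm (real_of_ereal (f x))) \<partial>N) \<le> (\<integral>\<^sup>+x. e2ennreal \<bar>f x\<bar> \<partial>N)"
    by (intro nn_integral_mono) (simp add: enn_real_of_ereal_le enn_real_of_ereal_le2)
  also have "\<dots> < \<infinity>" using L by (simp add: ereal_L1_def)
  finally show "(\<integral>\<^sup>+x. ennreal (norm (real_of_ereal (f x))) \<partial>N) < \<infinity>" .
qed

lemma L1_AE_finite:
  assumes L: "ereal_L1 N f" and S: "sets N = UNIV"
  shows "AE x in N. \<bar>f x\<bar> \<noteq> \<infinity>"
proof -
  have "AE x in N. e2ennreal \<bar>f x\<bar> \<noteq> \<infinity>"
    using L S by (intro nn_integral_PInf_AE borel_univ) (auto simp: ereal_L1_def)
  thus ?thesis by eventually_elim (auto simp: e2ennreal_infty)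
qed

lemma e2ennreal_add_le: "e2ennreal \<bar>e + ereal h\<bar> \<le> e2ennreal \<bar>e\<bar> + ennreal \<bar>h\<bar>"
  by (cases e) (auto simp: e2ennreal_ereal simp flip: ennreal_plus intro!: ennreal_leI)

lemma L1_add:
  assumes L: "ereal_L1 N f" and S: "sets N = UNIV" and F: "finite_measure N"
    and B: "\<And>x. \<bar>h x\<bar> \<le> B"
  shows "ereal_L1 N (\<lambda>x. f x + ereal (h x))"
    and "ereal_int N (\<lambda>x. f x + ereal (h x)) = ereal_int N f + integral\<^sup>L N h"
proof -
  interpret finite_measure N by (rule F)
  have ih: "integrable N h"
    by (rule integrable_const_bound[where B=B]) (use B S in \<open>auto intro: borel_univ\<close>)
  have "(\<integral>\<^sup>+x. e2ennreal \<bar>f x + ereal (h x)\<bar> \<partial>N) \<le> (\<integral>\<^sup>+x. e2ennreal \<bar>f x\<bar> + ennreal \<bar>h x\<bar> \<partial>N)"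
    by (intro nn_integral_mono e2ennreal_add_le)
  also have "\<dots> = (\<integral>\<^sup>+x. e2ennreal \<bar>f x\<bar> \<partial>N) + (\<integral>\<^sup>+x. ennreal \<bar>h x\<bar> \<partial>N)"
    using S by (intro nn_integral_add borel_univ) auto
  also have "\<dots> < \<infinity>"
    using L ih by (auto simp: ereal_L1_def integrable_iff_bounded)
  finally have fin: "(\<integral>\<^sup>+x. e2ennreal \<bar>f x + ereal (h x)\<bar> \<partial>N) < \<infinity>" .
  show "ereal_L1 N (\<lambda>x. f x + ereal (h x))"
    using L fin S unfolding ereal_L1_def by (auto intro: borel_univ)
  have "ereal_int N (\<lambda>x. f x + ereal (h x)) = integral\<^sup>L N (\<lambda>x. real_of_ereal (f x) + h x)"
    unfolding ereal_int_def
  proof (rule integral_cong_AE)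
    show "AE x in N. real_of_ereal (f x + ereal (h x)) = real_of_ereal (f x) + h x"
      using L1_AE_finite[OF L S]
    proof eventually_elim
      fix x assume "\<bar>f x\<bar> \<noteq> \<infinity>"
      then obtain r where "f x = ereal r" by (cases "f x") auto
      thus "real_of_ereal (f x + ereal (h x)) = real_of_ereal (f x) + h x" by simp
    qed
  qed (use S in \<open>auto intro: borel_univ\<close>)
  also have "\<dots> = ereal_int N f + integral\<^sup>L N h"
    unfolding ereal_int_def by (rule Bochner_Integration.integral_add[OF L1_integrable[OF L S] ih])
  finally show "ereal_int N (\<lambda>x. f x + ereal (h x)) = ereal_int N f + integral\<^sup>L N h" .
qed



definition Hf :: "(nat\<times>nat \<Rightarrow> real) \<Rightarrow> (nat\<times>nat \<Rightarrow> real) \<Rightarrow> (nat\<times>nat \<Rightarrow> real) \<Rightarrow> nat\<times>nat\<times>nat \<Rightarrow> real" where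
  "Hf h12 h13 h23 x = h12 (pr12 x) + h13 (pr13 x) + h23 (pr23 x)"

definition Ff :: "(nat\<times>nat \<Rightarrow> ereal) \<Rightarrow> (nat\<times>nat \<Rightarrow> ereal) \<Rightarrow> (nat\<times>nat \<Rightarrow> ereal) \<Rightarrow> nat\<times>nat\<times>nat \<Rightarrow> ereal" where
  "Ff f12 f13 f23 x = f12 (pr12 x) + f13 (pr13 x) + f23 (pr23 x)"

lemma finite_mu': "finite_measure mu" by (rule finite_mu)

lemma emeasure_mu_lt[simp]: "emeasure mu E < top"
  using emeasure_mono[of E UNIV mu] mu_finite by simp

lemma integral_marg12: fixes h :: "nat\<times>nat \<Rightarrow> real" shows "integral\<^sup>L (marg12 mu) h = integral\<^sup>L mu (\<lambda>x. h (pr12 x))"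
  unfolding marg12_def by (rule integral_distr) (auto intro: meas_univ borel_univ)
lemma integral_marg13: fixes h :: "nat\<times>nat \<Rightarrow> real" shows "integral\<^sup>L (marg13 mu) h = integral\<^sup>L mu (\<lambda>x. h (pr13 x))"
  unfolding marg13_def by (rule integral_distr) (auto intro: meas_univ borel_univ)
lemma integral_marg23: fixes h :: "nat\<times>nat \<Rightarrow> real" shows "integral\<^sup>L (marg23 mu) h = integral\<^sup>L mu (\<lambda>x. h (pr23 x))"
  unfolding marg23_def by (rule integral_distr) (auto intro: meas_univ borel_univ)
lemmas integral_marg = integral_marg12 integral_marg13 integral_marg23

lemma integrable_mu_bounded: "(\<And>x. \<bar>f x\<bar> \<le> B) \<Longrightarrow> integrable mu (f::_\<Rightarrow>real)"
proof -
  assume b: "\<And>x. \<bar>f x\<bar> \<le> B"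
  interpret finite_measure mu by (rule finite_mu)
  show ?thesis by (rule integrable_const_bound[where B=B]) (auto intro: borel_univ b)
qed

lemma improve:
  assumes adm: "dual_admissible mu f12 f13 f23"
    and B: "\<And>p. \<bar>h12 p\<bar> \<le> B" "\<And>p. \<bar>h13 p\<bar> \<le> B" "\<And>p. \<bar>h23 p\<bar> \<le> B"
    and x0: "Ff f12 f13 f23 x0 + ereal (Hf h12 h13 h23 x0) \<le> cost x0"
    and Hle: "\<And>x. x \<noteq> x0 \<Longrightarrow> Hf h12 h13 h23 x \<le> 0"
  shows "dual_admissible mu (\<lambda>p. f12 p + ereal (h12 p)) (\<lambda>p. f13 p + ereal (h13 p)) (\<lambda>p. f23 p + ereal (h23 p))"
    and "dual_value mu (\<lambda>p. f12 p + ereal (h12 p)) (\<lambda>p. f13 p + ereal (h13 p)) (\<lambda>p. f23 p + ereal (h23 p))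
         = dual_value mu f12 f13 f23 + integral\<^sup>L mu (Hf h12 h13 h23)"
proof -
  have L: "ereal_L1 (marg12 mu) f12" "ereal_L1 (marg13 mu) f13" "ereal_L1 (marg23 mu) f23"
    using adm by (auto simp: dual_admissible_def)
  note A1 = L1_add[where h=h12 and B=B, OF L(1) sets_marg(1) finite_marg(1) B(1)]
  note A2 = L1_add[where h=h13 and B=B, OF L(2) sets_marg(2) finite_marg(2) B(2)]
  note A3 = L1_add[where h=h23 and B=B, OF L(3) sets_marg(3) finite_marg(3) B(3)]
  have cons: "\<forall>n1 n2 n3. (n1, n2, n3) \<in> pos3 \<longrightarrow>
      (f12 (n1,n2) + ereal (h12 (n1,n2))) + (f13 (n1,n3) + ereal (h13 (n1,n3))) + (f23 (n2,n3) + ereal (h23 (n2,n3)))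
        \<le> cost (n1, n2, n3)"
  proof (intro allI impI)
    fix n1 n2 n3 assume p: "(n1,n2,n3) \<in> pos3"
    have eq: "(f12 (n1,n2) + ereal (h12 (n1,n2))) + (f13 (n1,n3) + ereal (h13 (n1,n3))) + (f23 (n2,n3) + ereal (h23 (n2,n3)))
       = Ff f12 f13 f23 (n1,n2,n3) + ereal (Hf h12 h13 h23 (n1,n2,n3))"
      by (simp add: Ff_def Hf_def ac_simps)
    show "(f12 (n1,n2) + ereal (h12 (n1,n2))) + (f13 (n1,n3) + ereal (h13 (n1,n3))) + (f23 (n2,n3) + ereal (h23 (n2,n3)))
        \<le> cost (n1, n2, n3)"
    proof (cases "(n1,n2,n3) = x0")
      case True thus ?thesis using x0 eq by simp
    next
      case False
      hence "ereal (Hf h12 h13 h23 (n1,n2,n3)) \<le> 0" using Hle by simp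
      hence "Ff f12 f13 f23 (n1,n2,n3) + ereal (Hf h12 h13 h23 (n1,n2,n3)) \<le> Ff f12 f13 f23 (n1,n2,n3) + 0"
        by (intro add_left_mono)
      also have "\<dots> \<le> cost (n1,n2,n3)" using adm p by (simp add: dual_admissible_def Ff_def)
      finally show ?thesis using eq by simp
    qed
  qed
  show "dual_admissible mu (\<lambda>p. f12 p + ereal (h12 p)) (\<lambda>p. f13 p + ereal (h13 p)) (\<lambda>p. f23 p + ereal (h23 p))"
    unfolding dual_admissible_def using A1(1) A2(1) A3(1) cons by blast
  have i1: "integrable mu (\<lambda>x. h12 (pr12 x))" by (rule integrable_mu_bounded[where B=B]) (rule B)
  have i2: "integrable mu (\<lambda>x. h13 (pr13 x))" by (rule integrable_mu_bounded[where B=B]) (rule B)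
  have i3: "integrable mu (\<lambda>x. h23 (pr23 x))" by (rule integrable_mu_bounded[where B=B]) (rule B)
  have "integral\<^sup>L mu (Hf h12 h13 h23) = integral\<^sup>L mu (\<lambda>x. h12 (pr12 x)) + integral\<^sup>L mu (\<lambda>x. h13 (pr13 x))
      + integral\<^sup>L mu (\<lambda>x. h23 (pr23 x))"
    unfolding Hf_def
    by (simp add: Bochner_Integration.integral_add i1 i2 i3)
  thus "dual_value mu (\<lambda>p. f12 p + ereal (h12 p)) (\<lambda>p. f13 p + ereal (h13 p)) (\<lambda>p. f23 p + ereal (h23 p))
         = dual_value mu f12 f13 f23 + integral\<^sup>L mu (Hf h12 h13 h23)"
    unfolding dual_value_def A1(2) A2(2) A3(2) integral_marg by simp
qed

lemma measure_mu_single: "measure mu {x} = w x"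
  by (simp add: measure_def emeasure_mu_single w_nonneg)

lemma int_lower:
  fixes H :: "nat\<times>nat\<times>nat \<Rightarrow> real"
  assumes K: "K \<ge> 0" and Hb: "\<And>x. H x \<ge> - K"
    and Hx0: "H x0 = t" and Hy1: "H y1 \<ge> - t/2" and Hy2: "H y2 \<ge> - t/2"
    and d: "x0 \<noteq> y1" "x0 \<noteq> y2" "y1 \<noteq> y2"
    and iH: "integrable mu H"
    and HQ: "\<And>x. x \<noteq> x0 \<Longrightarrow> x \<noteq> y1 \<Longrightarrow> x \<noteq> y2 \<Longrightarrow> H x < 0 \<Longrightarrow> x \<in> Q"
  shows "integral\<^sup>L mu H \<ge> t * w x0 - (t/2) * w y1 - (t/2) * w y2 - K * measure mu Q"
proof -
  define L where "L x = t * indicator {x0} x - (t/2) * indicator {y1} x - (t/2) * indicator {y2} x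
       - K * indicator Q x" for x
  have LH: "L x \<le> H x" for x
  proof -
    consider "x = x0" | "x = y1" | "x = y2" | "x \<noteq> x0 \<and> x \<noteq> y1 \<and> x \<noteq> y2" by blast
    thus ?thesis
    proof cases
      case 1 thus ?thesis using d K Hx0 by (auto simp: L_def indicator_def)
    next
      case 2 thus ?thesis using d K Hy1 by (auto simp: L_def indicator_def)
    next
      case 3 thus ?thesis using d K Hy2 by (auto simp: L_def indicator_def)
    next
      case 4
      show ?thesis
      proof (cases "H x < 0")
        case True thus ?thesis using 4 HQ[of x] Hb[of x] by (auto simp: L_def indicator_def)
      next
        case False thus ?thesis using 4 K by (auto simp: L_def indicator_def)
      qed
    qed
  qed
  have iL: "integrable mu L" unfolding L_def
    by (intro Bochner_Integration.integrable_diff integrable_mult_right integrable_real_indicator) auto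
  have "integral\<^sup>L mu L \<le> integral\<^sup>L mu H"
    by (intro integral_mono iL iH LH)
  moreover have "integral\<^sup>L mu L = t * w x0 - (t/2) * w y1 - (t/2) * w y2 - K * measure mu Q"
    unfolding L_def
    by (simp add: Bochner_Integration.integral_diff integrable_real_indicator measure_mu_single)
  ultimately show ?thesis by simp
qed



definition nonA :: "(nat\<times>nat\<times>nat) set" where "nonA = {x. \<forall>m\<ge>1. x \<notin> A m}"

lemma measure_Q:
  assumes "Q \<subseteq> Qmax N \<inter> nonA"
  shows "measure mu Q \<le> a0 * (3 * ((1/2)^N * 2))"
proof -
  have "emeasure mu Q = (\<integral>\<^sup>+x. ennreal (w x) * indicator Q x \<partial>count_space UNIV)"
    by (simp add: emeasure_mu)
  also have "\<dots> \<le> (\<integral>\<^sup>+x. ennreal a0 * (ennreal (weps x) * indicator (Qmax N) x) \<partial>count_space UNIV)"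
  proof (intro nn_integral_mono)
    fix x
    show "ennreal (w x) * indicator Q x \<le> ennreal a0 * (ennreal (weps x) * indicator (Qmax N) x)"
    proof (cases "x \<in> Q")
      case True
      hence "wp x = 0" using assms by (intro wp_notA) (auto simp: nonA_def)
      thus ?thesis using True assms a0_pos weps_nonneg
        by (auto simp: w_def indicator_def ennreal_mult)
    qed simp
  qed
  also have "\<dots> = ennreal a0 * (\<integral>\<^sup>+x. ennreal (weps x) * indicator (Qmax N) x \<partial>count_space UNIV)"
    by (rule nn_integral_cmult) simp
  also have "\<dots> \<le> ennreal a0 * ennreal (3 * ((1/2)^N * 2))"
    by (intro mult_left_mono int_weps_Qmax) simp
  also have "\<dots> = ennreal (a0 * (3 * ((1/2)^N * 2)))"
    using a0_pos by (simp add: ennreal_mult)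
  finally show ?thesis unfolding measure_def
    by (intro enn2real_leI) (use a0_pos in auto)
qed

lemma cube_pow: "(n+1)^3 \<le> 8 * 2^n" for n :: nat
proof (induction n rule: nat_less_induct)
  case (1 n)
  show ?case
  proof (cases "n \<le> 4")
    case True
    then have "n = 0 \<or> n = 1 \<or> n = 2 \<or> n = 3 \<or> n = 4" by auto
    thus ?thesis by (elim disjE) (simp_all add: power3_eq_cube)
  next
    case False
    then obtain k where k: "n = Suc k" "k \<ge> 4" by (cases n) auto
    have ih: "(k+1)^3 \<le> 8 * 2^k" using 1 k by auto
    have "(n+1)^3 = (k+2)^3" using k by simp
    also have "\<dots> \<le> 2 * (k+1)^3"
    proof -
      have "(k+2)^3 = k^3 + 6*k^2 + 12*k + 8" by (simp add: power3_eq_cube power2_eq_square algebra_simps)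
      moreover have "2*(k+1)^3 = 2*k^3 + 6*k^2 + 6*k + 2" by (simp add: power3_eq_cube power2_eq_square algebra_simps)
      moreover have "k^3 \<ge> 4*k^2" using k(2) by (simp add: power3_eq_cube power2_eq_square)
      moreover have "k^2 \<ge> 4*k" using k(2) by (simp add: power2_eq_square)
      ultimately show ?thesis using k(2) by linarith
    qed
    also have "\<dots> \<le> 2 * (8 * 2^k)" using ih by simp
    also have "\<dots> = 8 * 2^n" using k by simp
    finally show ?thesis .
  qed
qed



lemma inv_sq_diff: fixes x :: real assumes "x \<ge> 1" shows "1/(x+1)^3 \<le> 1/x^2 - 1/(x+1)^2"
proof -
  have p: "x > 0" using assms by simp
  have a: "x^2 * (x + 2) \<le> (x+1)^3"
  proof -
    have "(x+1)^3 = x^2 * (x+2) + (x^2 + 3*x + 1)" by (simp add: power2_eq_square power3_eq_cube algebra_simps)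
    moreover have "x^2 + 3*x + 1 \<ge> 0" using p by (simp add: add_nonneg_nonneg)
    ultimately show ?thesis by linarith
  qed
  have q: "x + 1 \<noteq> 0" using p by simp
  have "1/(x+1)^2 = (x+1)/(x+1)^3" using q by (simp add: power3_eq_cube power2_eq_square)
  hence "1/(x+1)^3 + 1/(x+1)^2 = (1 + (x+1))/(x+1)^3" by (simp add: add_divide_distrib)
  hence "1/(x+1)^3 + 1/(x+1)^2 = (x+2)/(x+1)^3" by (simp add: add.commute)
  also have "\<dots> \<le> 1/x^2"
    using p a by (simp add: divide_simps mult.commute)
  finally show ?thesis by simp
qed

lemma pi_sq_le: "pi^2 \<le> (16::real)"
proof -
  have "pi \<le> 4" using pi_less_4 by simp
  hence "pi * pi \<le> 4 * 4" by (intro mult_mono) auto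
  thus ?thesis by (simp add: power2_eq_square)
qed

lemma key_ineq:
  assumes n: "n \<ge> 1"
  shows "(1 - a0) * (2 / (pi * real n)^2) - (1 - a0) * (2 / (pi * real (n+1))^2)
     > a0 * (1/2)^(3*n+4) + (3/2) * (a0 * (3 * ((1/2)^(n+1) * 2)))"
proof -
  have rn: "real n \<ge> 1" using n by simp
  have pp: "pi^2 > 0" by simp
  have i1: "1 / real n ^ 2 - 1 / real (n+1) ^ 2 \<ge> 1 / real (n+1)^3"
    using inv_sq_diff[OF rn] by (simp add: add.commute)
  have "real ((n+1)^3) \<le> real (8 * 2^n)" using cube_pow[of n] by linarith
  hence c3: "real (n+1)^3 \<le> 8 * 2^n" by simp
  have "1 / real (n+1)^3 \<ge> 1 / (8 * 2^n)"
    by (intro divide_left_mono c3) auto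
  with i1 have d: "1 / real n ^ 2 - 1 / real (n+1) ^ 2 \<ge> 1 / (8 * 2^n)" by linarith
  have "(2 / (pi * real n)^2) - (2 / (pi * real (n+1))^2) = (2/pi^2) * (1 / real n ^ 2 - 1 / real (n+1) ^ 2)"
    by (simp add: power_mult_distrib right_diff_distrib)
  also have "\<dots> \<ge> (1/8) * (1 / (8 * 2^n))"
  proof (intro mult_mono d)
    show "1/8 \<le> 2/pi^2" using pi_sq_le pp by (simp add: divide_simps)
  qed auto
  finally have e: "(2 / (pi * real n)^2) - (2 / (pi * real (n+1))^2) \<ge> 1 / (64 * 2^n)" by simp
  have h1: "(1/2::real)^(3*n+4) \<le> (1/2)^n"
    by (intro power_decreasing) auto
  have h2: "(1/2::real)^n = 1 / 2^n" by (simp add: power_one_over)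
  have h3: "(1/2::real)^(n+1) * 2 = (1/2)^n" by simp
  have "a0 * (1/2)^(3*n+4) + (3/2) * (a0 * (3 * ((1/2)^(n+1) * 2))) \<le> a0 * (1/2)^n + (9/2) * (a0 * (1/2)^n)"
    using h1 a0_pos unfolding h3 by simp
  also have "\<dots> = (11/2) * a0 / 2^n" unfolding h2 by simp
  also have "\<dots> < (1 - a0) * (1 / (64 * 2^n))" by (simp add: a0_def divide_simps)
  also have "\<dots> \<le> (1 - a0) * ((2 / (pi * real n)^2) - (2 / (pi * real (n+1))^2))"
    by (intro mult_left_mono e) (use a0_lt1 in simp)
  finally show ?thesis by (simp add: algebra_simps)
qed



definition hA :: "nat \<Rightarrow> real \<Rightarrow> nat\<times>nat \<Rightarrow> real" where
  "hA n t p = (if p = (n, n+1) then t/2 else if snd p = n+1 \<and> fst p \<noteq> n+2 then -t/2 else 0)"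
definition hS :: "nat \<Rightarrow> real \<Rightarrow> nat\<times>nat \<Rightarrow> real" where
  "hS n t p = hA n t (snd p, fst p)"
definition hB :: "nat \<Rightarrow> real \<Rightarrow> nat\<times>nat \<Rightarrow> real" where
  "hB n t p = (if p = (n, n+2) \<or> p = (n+2, n) then -t/2 else 0)"

lemma hA_val: "hA n t (a,c) = (if c = n+1 then (if a = n then t/2 else if a = n+2 then 0 else -t/2) else 0)"
  by (auto simp: hA_def)
lemma hS_val: "hS n t (c,a) = (if c = n+1 then (if a = n then t/2 else if a = n+2 then 0 else -t/2) else 0)"
  by (auto simp: hS_def hA_def)
lemma hB_val: "hB n t (a,b) = (if (a = n \<and> b = n+2) \<or> (a = n+2 \<and> b = n) then -t/2 else 0)"
  by (auto simp: hB_def)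

lemma hA_bound: "t \<ge> 0 \<Longrightarrow> \<bar>hA n t p\<bar> \<le> t" by (auto simp: hA_def)
lemma hS_bound: "t \<ge> 0 \<Longrightarrow> \<bar>hS n t p\<bar> \<le> t" by (auto simp: hS_def hA_def)
lemma hB_bound: "t \<ge> 0 \<Longrightarrow> \<bar>hB n t p\<bar> \<le> t" by (auto simp: hB_def)

abbreviation "H3 n t \<equiv> Hf (hB n t) (hA n t) (hA n t)"

lemma H3_eq: "H3 n t (a,b,c) = hB n t (a,b) + hA n t (a,c) + hA n t (b,c)"
  by (simp add: Hf_def)

lemma H3_x0: "H3 n t (n,n,n+1) = t"
  by (simp add: H3_eq hA_val hB_val)

lemma H3_le: assumes "t > 0" "x \<noteq> (n,n,n+1)" shows "H3 n t x \<le> 0"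
proof -
  obtain a b c where x: "x = (a,b,c)" by (cases x)
  show ?thesis
  proof (cases "c = n+1")
    case False thus ?thesis using assms by (simp add: x H3_eq hA_val hB_val)
  next
    case True
    have "a \<noteq> n \<or> b \<noteq> n" using assms True x by auto
    thus ?thesis using assms True unfolding x H3_eq hA_val hB_val
      by (cases "a = n"; cases "b = n"; cases "a = n+2"; cases "b = n+2") auto
  qed
qed

lemma hA_ge: "t > 0 \<Longrightarrow> hA n t p \<ge> -t/2" by (auto simp: hA_def)
lemma hS_ge: "t > 0 \<Longrightarrow> hS n t p \<ge> -t/2" by (auto simp: hS_def hA_def)
lemma hB_ge: "t > 0 \<Longrightarrow> hB n t p \<ge> -t/2" by (auto simp: hB_def)

lemma H3_ge: assumes "t > 0" shows "H3 n t x \<ge> -(3/2*t)"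
proof -
  have "hB n t (pr12 x) \<ge> -t/2" "hA n t (pr13 x) \<ge> -t/2" "hA n t (pr23 x) \<ge> -t/2"
    using hA_ge[OF assms] hB_ge[OF assms] by auto
  thus ?thesis unfolding Hf_def by linarith
qed

lemma H3_y: "H3 n t (n+2,n+1,n+1) = -t/2" "H3 n t (n+1,n+2,n+1) = -t/2"
  by (simp_all add: H3_eq hA_val hB_val)

lemma H3_Q: assumes "t > 0" "H3 n t x < 0" shows "x \<in> Qmax (n+1)"
proof (rule ccontr)
  obtain a b c where x: "x = (a,b,c)" by (cases x)
  assume "x \<notin> Qmax (n+1)"
  hence "a \<le> n" "b \<le> n" "c \<le> n" by (auto simp: Qmax_def x)
  hence "H3 n t x = 0" by (simp add: x H3_eq hA_val hB_val)
  thus False using assms by simp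
qed

lemma H3_nonA: assumes "t > 0" "H3 n t x < 0" "x \<noteq> (n+2,n+1,n+1)" "x \<noteq> (n+1,n+2,n+1)"
  shows "x \<in> nonA"
proof -
  { fix m assume m: "m \<ge> 1" "x \<in> A m"
    then consider "x = (m+1,m,m)" | "x = (m,m+1,m)" | "x = (m,m,m+1)" by (auto simp: A_def)
    hence False
    proof cases
      case 1 thus False using assms
        by (cases "m = n+1"; cases "m = n") (auto simp: H3_eq hA_val hB_val split: if_splits)
    next
      case 2 thus False using assms
        by (cases "m = n+1"; cases "m = n") (auto simp: H3_eq hA_val hB_val split: if_splits)
    next
      case 3 thus False using assms
        by (cases "m = n+1"; cases "m = n") (auto simp: H3_eq hA_val hB_val split: if_splits)
    qed }
  thus ?thesis by (auto simp: nonA_def)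
qed



lemma w_A:
  assumes m: "m \<ge> 1" and x: "x \<in> A m"
  shows "w x = (1 - a0) * (2 / (pi * real m)^2) + a0 * (1/2)^(3*m+1)"
proof -
  have p: "(1/2::real)^(3*m+1) = (1/2)^(m+1) * (1/2)^m * (1/2)^m"
  proof -
    have "3*m+1 = (m+1) + m + m" by simp
    hence "(1/2::real)^(3*m+1) = (1/2)^((m+1) + m + m)" by (simp only:)
    thus ?thesis by (simp only: power_add)
  qed
  have "weps x = (1/2)^(m+1) * (1/2)^m * (1/2)^m"
    using x m by (auto simp: A_def weps_eq ee_def mult_ac)
  hence "weps x = (1/2)^(3*m+1)" by (simp only: p)
  thus ?thesis using wp_A[OF m x] by (simp add: w_def)
qed

lemma gain:
  assumes n: "n \<ge> 1" and t: "t > 0" and x0: "x0 \<in> A n" and y1: "y1 \<in> A (n+1)" and y2: "y2 \<in> A (n+1)"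
    and Q: "measure mu Q \<le> a0 * (3 * ((1/2)^(n+1) * 2))"
  shows "t * w x0 - (t/2) * w y1 - (t/2) * w y2 - (3/2*t) * measure mu Q > 0"
proof -
  have wx: "w x0 \<ge> (1 - a0) * (2 / (pi * real n)^2)"
    using w_A[OF n x0] a0_pos by simp
  have e: "3 * (n+1) + 1 = 3*n+4" by simp
  have wy1: "w y1 = (1 - a0) * (2 / (pi * real (n+1))^2) + a0 * (1/2)^(3*(n+1)+1)"
    by (rule w_A[OF _ y1]) simp
  have wy2: "w y2 = (1 - a0) * (2 / (pi * real (n+1))^2) + a0 * (1/2)^(3*(n+1)+1)"
    by (rule w_A[OF _ y2]) simp
  have ep: "a0 * (1/2::real)^(3*(n+1)+1) = a0 * (1/2)^(3*n+4)" by (simp only: e)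
  have k: "(1 - a0) * (2 / (pi * real n)^2) - (1 - a0) * (2 / (pi * real (n+1))^2)
     > a0 * (1/2)^(3*n+4) + (3/2) * (a0 * (3 * ((1/2)^(n+1) * 2)))" by (rule key_ineq[OF n])
  have "w x0 - (1/2) * w y1 - (1/2) * w y2 - (3/2) * measure mu Q > 0"
    using wx wy1 wy2 k Q ep by linarith
  hence "t * (w x0 - (1/2) * w y1 - (1/2) * w y2 - (3/2) * measure mu Q) > 0"
    using t by simp
  thus ?thesis by (simp add: algebra_simps)
qed

lemma cost_A: "m \<ge> 1 \<Longrightarrow> x \<in> A m \<Longrightarrow> cost x = 1"
  by (auto simp: cost_def)

lemma A_pos3: "m \<ge> 1 \<Longrightarrow> x \<in> A m \<Longrightarrow> x \<in> pos3"
  by (auto simp: A_def pos3_def)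

lemma adm_finite:
  assumes adm: "dual_admissible mu f12 f13 f23" and "a \<ge> 1" "b \<ge> 1"
  shows "\<bar>f12 (a,b)\<bar> \<noteq> \<infinity>" "\<bar>f13 (a,b)\<bar> \<noteq> \<infinity>" "\<bar>f23 (a,b)\<bar> \<noteq> \<infinity>"
  using adm assms L1_point_finite[OF _ sets_marg(1) marg_single_pos(1)]
    L1_point_finite[OF _ sets_marg(2) marg_single_pos(2)] L1_point_finite[OF _ sets_marg(3) marg_single_pos(3)]
  by (auto simp: dual_admissible_def)

lemma Ff_real:
  assumes adm: "dual_admissible mu f12 f13 f23" and "x \<in> pos3"
  shows "Ff f12 f13 f23 x = ereal (real_of_ereal (f12 (pr12 x)) + real_of_ereal (f13 (pr13 x)) + real_of_ereal (f23 (pr23 x)))"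
proof -
  obtain a b c where x: "x = (a,b,c)" by (cases x)
  have p: "a \<ge> 1" "b \<ge> 1" "c \<ge> 1" using assms(2) by (auto simp: x pos3_def)
  have "\<bar>f12 (a,b)\<bar> \<noteq> \<infinity>" "\<bar>f13 (a,c)\<bar> \<noteq> \<infinity>" "\<bar>f23 (b,c)\<bar> \<noteq> \<infinity>"
    using adm_finite[OF adm] p by auto
  thus ?thesis by (auto simp: x Ff_def real_of_ereal_add)
qed

lemma Ff_le_cost:
  assumes adm: "dual_admissible mu f12 f13 f23" and "x \<in> pos3"
  shows "Ff f12 f13 f23 x \<le> cost x"
  using assms by (cases x) (auto simp: dual_admissible_def Ff_def)

lemma slack_generic:
  assumes adm: "dual_admissible mu f12 f13 f23"
    and mx: "\<And>g12 g13 g23. dual_admissible mu g12 g13 g23 \<Longrightarrow> dual_value mu g12 g13 g23 \<le> dual_value mu f12 f13 f23"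
    and n: "n \<ge> 1" and xA: "x0 \<in> A n" and y1A: "ya \<in> A (n+1)" and y2A: "yb \<in> A (n+1)"
    and d: "x0 \<noteq> ya" "x0 \<noteq> yb" "ya \<noteq> yb"
    and hyp: "\<And>t. t > 0 \<Longrightarrow> (\<forall>p. \<bar>ka t p\<bar> \<le> t \<and> \<bar>kb t p\<bar> \<le> t \<and> \<bar>kc t p\<bar> \<le> t)
       \<and> Hf (ka t) (kb t) (kc t) x0 = t \<and> (\<forall>x. x \<noteq> x0 \<longrightarrow> Hf (ka t) (kb t) (kc t) x \<le> 0)
       \<and> (\<forall>x. Hf (ka t) (kb t) (kc t) x \<ge> -(3/2*t))
       \<and> Hf (ka t) (kb t) (kc t) ya \<ge> -t/2 \<and> Hf (ka t) (kb t) (kc t) yb \<ge> -t/2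
       \<and> (\<forall>x. Hf (ka t) (kb t) (kc t) x < 0 \<longrightarrow> x \<noteq> ya \<longrightarrow> x \<noteq> yb \<longrightarrow> x \<in> Qmax (n+1) \<inter> nonA)"
  shows "Ff f12 f13 f23 x0 = 1"
proof (rule ccontr)
  have xp: "x0 \<in> pos3" using A_pos3[OF n xA] .
  define r where "r = real_of_ereal (f12 (pr12 x0)) + real_of_ereal (f13 (pr13 x0)) + real_of_ereal (f23 (pr23 x0))"
  have Fr: "Ff f12 f13 f23 x0 = ereal r" unfolding r_def by (rule Ff_real[OF adm xp])
  have "ereal r \<le> 1" using Ff_le_cost[OF adm xp] cost_A[OF n xA] Fr by simp
  moreover assume "Ff f12 f13 f23 x0 \<noteq> 1"
  ultimately have r1: "r < 1" using Fr by (simp add: one_ereal_def)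
  define t where "t = 1 - r"
  have t: "t > 0" using r1 by (simp add: t_def)
  note hy = hyp[OF t]
  let ?H = "Hf (ka t) (kb t) (kc t)"
  let ?g12 = "\<lambda>p. f12 p + ereal (ka t p)"
  let ?g13 = "\<lambda>p. f13 p + ereal (kb t p)"
  let ?g23 = "\<lambda>p. f23 p + ereal (kc t p)"
  have B: "\<And>p. \<bar>ka t p\<bar> \<le> t" "\<And>p. \<bar>kb t p\<bar> \<le> t" "\<And>p. \<bar>kc t p\<bar> \<le> t" using hy by auto
  have Hx0: "?H x0 = t" using hy by auto
  have x0c: "Ff f12 f13 f23 x0 + ereal (?H x0) \<le> cost x0"
    using Fr cost_A[OF n xA] Hx0 by (simp add: t_def)
  have Hle: "\<And>x. x \<noteq> x0 \<Longrightarrow> ?H x \<le> 0" using hy by auto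
  note I = improve[OF adm B(1) B(2) B(3) x0c Hle]
  define Q where "Q = Qmax (n+1) \<inter> nonA"
  have mQ: "measure mu Q \<le> a0 * (3 * ((1/2)^(n+1) * 2))" by (rule measure_Q) (simp add: Q_def)
  have Hge: "\<And>x. ?H x \<ge> -(3/2*t)" using hy by auto
  have iH: "integrable mu ?H"
  proof (rule integrable_mu_bounded[where B="3/2*t"])
    fix x
    show "\<bar>?H x\<bar> \<le> 3/2*t"
    proof (cases "x = x0")
      case True thus ?thesis using t Hx0 by simp
    next
      case False thus ?thesis using Hge[of x] Hle[OF False] by simp
    qed
  qed
  have low: "integral\<^sup>L mu ?H \<ge> t * w x0 - (t/2) * w ya - (t/2) * w yb - (3/2*t) * measure mu Q"
  proof (rule int_lower)
    show "0 \<le> 3/2*t" using t by simp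
    show "\<And>x. - (3 / 2 * t) \<le> ?H x" by (rule Hge)
    show "?H x0 = t" by (rule Hx0)
    show "- t / 2 \<le> ?H ya" using hy by auto
    show "- t / 2 \<le> ?H yb" using hy by auto
    show "integrable mu ?H" by (rule iH)
    show "\<And>x. x \<noteq> x0 \<Longrightarrow> x \<noteq> ya \<Longrightarrow> x \<noteq> yb \<Longrightarrow> ?H x < 0 \<Longrightarrow> x \<in> Q"
      unfolding Q_def using hy by auto
  qed (use d in auto)
  have "t * w x0 - (t/2) * w ya - (t/2) * w yb - (3/2*t) * measure mu Q > 0"
    by (rule gain[OF n t xA y1A y2A mQ])
  hence "integral\<^sup>L mu ?H > 0" using low by linarith
  hence "dual_value mu ?g12 ?g13 ?g23 > dual_value mu f12 f13 f23" using I(2) by simp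
  moreover have "dual_value mu ?g12 ?g13 ?g23 \<le> dual_value mu f12 f13 f23" by (rule mx[OF I(1)])
  ultimately show False by simp
qed

lemma rot_Qmax: "(b,c,a) \<in> Qmax N \<longleftrightarrow> (a,b,c) \<in> Qmax N" by (auto simp: Qmax_def)
lemma swap_Qmax: "(a,c,b) \<in> Qmax N \<longleftrightarrow> (a,b,c) \<in> Qmax N" by (auto simp: Qmax_def)
lemma rot_nonA: "(b,c,a) \<in> nonA \<longleftrightarrow> (a,b,c) \<in> nonA" by (auto simp: nonA_def A_def)
lemma swap_nonA: "(a,c,b) \<in> nonA \<longleftrightarrow> (a,b,c) \<in> nonA" by (auto simp: nonA_def A_def)

lemma H1_eq: "Hf (hS n t) (hS n t) (hB n t) (a,b,c) = H3 n t (b,c,a)"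
  by (simp add: Hf_def hS_def)
lemma H2_eq: "Hf (hA n t) (hB n t) (hS n t) (a,b,c) = H3 n t (a,c,b)"
  by (simp add: Hf_def hS_def)

lemma slack_all:
  assumes adm: "dual_admissible mu f12 f13 f23"
    and mx: "\<And>g12 g13 g23. dual_admissible mu g12 g13 g23 \<Longrightarrow> dual_value mu g12 g13 g23 \<le> dual_value mu f12 f13 f23"
    and n: "n \<ge> 1"
  shows "Ff f12 f13 f23 (n,n,n+1) = 1" "Ff f12 f13 f23 (n+1,n,n) = 1" "Ff f12 f13 f23 (n,n+1,n) = 1"
proof -
  show "Ff f12 f13 f23 (n,n,n+1) = 1"
  proof (rule slack_generic[where ya="(n+2,n+1,n+1)" and yb="(n+1,n+2,n+1)" and ka="hB n" and kb="hA n" and kc="hA n", OF adm mx n])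
    fix t :: real assume t: "t > 0"
    show "(\<forall>p. \<bar>hB n t p\<bar> \<le> t \<and> \<bar>hA n t p\<bar> \<le> t \<and> \<bar>hA n t p\<bar> \<le> t)
       \<and> H3 n t (n,n,n+1) = t \<and> (\<forall>x. x \<noteq> (n,n,n+1) \<longrightarrow> H3 n t x \<le> 0)
       \<and> (\<forall>x. H3 n t x \<ge> -(3/2*t))
       \<and> H3 n t (n+2,n+1,n+1) \<ge> -t/2 \<and> H3 n t (n+1,n+2,n+1) \<ge> -t/2
       \<and> (\<forall>x. H3 n t x < 0 \<longrightarrow> x \<noteq> (n+2,n+1,n+1) \<longrightarrow> x \<noteq> (n+1,n+2,n+1) \<longrightarrow> x \<in> Qmax (n+1) \<inter> nonA)"
      using t hA_bound[of t n] hB_bound[of t n] H3_x0[of n t] H3_le[OF t] H3_ge[OF t] H3_y[of n t]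
        H3_Q[OF t] H3_nonA[OF t]
      by (intro conjI allI impI) auto
  qed (auto simp: A_def)
  show "Ff f12 f13 f23 (n+1,n,n) = 1"
  proof (rule slack_generic[where ya="(n+1,n+2,n+1)" and yb="(n+1,n+1,n+2)" and ka="hS n" and kb="hS n" and kc="hB n", OF adm mx n])
    fix t :: real assume t: "t > 0"
    let ?H = "Hf (hS n t) (hS n t) (hB n t)"
    have Hr: "?H x = H3 n t (fst (snd x), snd (snd x), fst x)" for x
      by (cases x) (simp add: H1_eq)
    show "(\<forall>p. \<bar>hS n t p\<bar> \<le> t \<and> \<bar>hS n t p\<bar> \<le> t \<and> \<bar>hB n t p\<bar> \<le> t)
       \<and> ?H (n+1,n,n) = t \<and> (\<forall>x. x \<noteq> (n+1,n,n) \<longrightarrow> ?H x \<le> 0)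
       \<and> (\<forall>x. ?H x \<ge> -(3/2*t))
       \<and> ?H (n+1,n+2,n+1) \<ge> -t/2 \<and> ?H (n+1,n+1,n+2) \<ge> -t/2
       \<and> (\<forall>x. ?H x < 0 \<longrightarrow> x \<noteq> (n+1,n+2,n+1) \<longrightarrow> x \<noteq> (n+1,n+1,n+2) \<longrightarrow> x \<in> Qmax (n+1) \<inter> nonA)"
    proof (intro conjI allI impI)
      fix p show "\<bar>hS n t p\<bar> \<le> t" "\<bar>hS n t p\<bar> \<le> t" "\<bar>hB n t p\<bar> \<le> t"
        using t hS_bound[of t n] hB_bound[of t n] by auto
    next
      show "?H (n+1,n,n) = t" using H3_x0[of n t] by (simp add: H1_eq)
    next
      fix x :: "nat\<times>nat\<times>nat" assume "x \<noteq> (n+1,n,n)"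
      thus "?H x \<le> 0" using H3_le[OF t] by (cases x) (auto simp: H1_eq)
    next
      fix x :: "nat\<times>nat\<times>nat" show "?H x \<ge> -(3/2*t)" using H3_ge[OF t] by (cases x) (auto simp: H1_eq)
    next
      show "?H (n+1,n+2,n+1) \<ge> -t/2" using H3_y[of n t] by (simp add: H1_eq)
    next
      show "?H (n+1,n+1,n+2) \<ge> -t/2" using H3_y[of n t] by (simp add: H1_eq)
    next
      fix x :: "nat\<times>nat\<times>nat" assume "?H x < 0" "x \<noteq> (n+1,n+2,n+1)" "x \<noteq> (n+1,n+1,n+2)"
      thus "x \<in> Qmax (n+1) \<inter> nonA"
      proof (cases x)
        case (fields a b c)
        assume h: "?H x < 0" "x \<noteq> (n+1,n+2,n+1)" "x \<noteq> (n+1,n+1,n+2)"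
        have h3: "H3 n t (b,c,a) < 0" using h(1) by (simp add: fields H1_eq)
        have "(b,c,a) \<in> Qmax (n+1)" by (rule H3_Q[OF t h3])
        moreover have "(b,c,a) \<in> nonA" by (rule H3_nonA[OF t h3]) (use h fields in auto)
        ultimately show ?thesis by (simp add: fields rot_Qmax rot_nonA)
      qed
    qed
  qed (auto simp: A_def)
  show "Ff f12 f13 f23 (n,n+1,n) = 1"
  proof (rule slack_generic[where ya="(n+2,n+1,n+1)" and yb="(n+1,n+1,n+2)" and ka="hA n" and kb="hB n" and kc="hS n", OF adm mx n])
    fix t :: real assume t: "t > 0"
    let ?H = "Hf (hA n t) (hB n t) (hS n t)"
    show "(\<forall>p. \<bar>hA n t p\<bar> \<le> t \<and> \<bar>hB n t p\<bar> \<le> t \<and> \<bar>hS n t p\<bar> \<le> t)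
       \<and> ?H (n,n+1,n) = t \<and> (\<forall>x. x \<noteq> (n,n+1,n) \<longrightarrow> ?H x \<le> 0)
       \<and> (\<forall>x. ?H x \<ge> -(3/2*t))
       \<and> ?H (n+2,n+1,n+1) \<ge> -t/2 \<and> ?H (n+1,n+1,n+2) \<ge> -t/2
       \<and> (\<forall>x. ?H x < 0 \<longrightarrow> x \<noteq> (n+2,n+1,n+1) \<longrightarrow> x \<noteq> (n+1,n+1,n+2) \<longrightarrow> x \<in> Qmax (n+1) \<inter> nonA)"
    proof (intro conjI allI impI)
      fix p show "\<bar>hA n t p\<bar> \<le> t" "\<bar>hB n t p\<bar> \<le> t" "\<bar>hS n t p\<bar> \<le> t"
        using t hA_bound[of t n] hS_bound[of t n] hB_bound[of t n] by auto
    next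
      show "?H (n,n+1,n) = t" using H3_x0[of n t] by (simp add: H2_eq)
    next
      fix x :: "nat\<times>nat\<times>nat" assume "x \<noteq> (n,n+1,n)"
      thus "?H x \<le> 0" using H3_le[OF t] by (cases x) (auto simp: H2_eq)
    next
      fix x :: "nat\<times>nat\<times>nat" show "?H x \<ge> -(3/2*t)" using H3_ge[OF t] by (cases x) (auto simp: H2_eq)
    next
      show "?H (n+2,n+1,n+1) \<ge> -t/2" using H3_y[of n t] by (simp add: H2_eq)
    next
      show "?H (n+1,n+1,n+2) \<ge> -t/2" using H3_y[of n t] by (simp add: H2_eq)
    next
      fix x :: "nat\<times>nat\<times>nat" assume "?H x < 0" "x \<noteq> (n+2,n+1,n+1)" "x \<noteq> (n+1,n+1,n+2)"
      thus "x \<in> Qmax (n+1) \<inter> nonA"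
      proof (cases x)
        case (fields a b c)
        assume h: "?H x < 0" "x \<noteq> (n+2,n+1,n+1)" "x \<noteq> (n+1,n+1,n+2)"
        have h3: "H3 n t (a,c,b) < 0" using h(1) by (simp add: fields H2_eq)
        have "(a,c,b) \<in> Qmax (n+1)" by (rule H3_Q[OF t h3])
        moreover have "(a,c,b) \<in> nonA" by (rule H3_nonA[OF t h3]) (use h fields in auto)
        ultimately show ?thesis by (simp add: fields swap_Qmax swap_nonA)
      qed
    qed
  qed (auto simp: A_def)
qed



lemma L1_diag_lower:
  fixes f :: "nat\<times>nat \<Rightarrow> ereal" and m :: "nat \<Rightarrow> real"
  assumes L: "ereal_L1 M f" and S: "sets M = UNIV"
    and mm: "\<And>n. n \<ge> 1 \<Longrightarrow> emeasure M {(n,n)} \<ge> ennreal (m n)" and m0: "\<And>n. m n \<ge> 0"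
  shows "ennreal (\<Sum>n\<in>{1..N}. \<bar>real_of_ereal (f (n,n))\<bar> * m n) \<le> (\<integral>\<^sup>+x. e2ennreal \<bar>f x\<bar> \<partial>M)"
proof -
  let ?D = "(\<lambda>n. (n,n)) ` {1..N}"
  have inj: "inj_on (\<lambda>n::nat. (n,n)) {1..N}" by (auto simp: inj_on_def)
  have "ennreal (\<Sum>n\<in>{1..N}. \<bar>real_of_ereal (f (n,n))\<bar> * m n)
      = (\<Sum>n\<in>{1..N}. ennreal (\<bar>real_of_ereal (f (n,n))\<bar> * m n))"
    by (rule sum_ennreal[symmetric]) (use m0 in \<open>auto intro!: mult_nonneg_nonneg real_of_ereal_pos\<close>)
  also have "\<dots> = (\<Sum>n\<in>{1..N}. ennreal \<bar>real_of_ereal (f (n,n))\<bar> * ennreal (m n))"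
    by (intro sum.cong refl) (simp add: ennreal_mult m0 real_of_ereal_pos)
  also have "\<dots> \<le> (\<Sum>n\<in>{1..N}. e2ennreal \<bar>f (n,n)\<bar> * emeasure M {(n,n)})"
    by (intro sum_mono mult_mono enn_real_of_ereal_le mm) auto
  also have "\<dots> = (\<Sum>x\<in>?D. e2ennreal \<bar>f x\<bar> * emeasure M {x})"
    by (subst sum.reindex[OF inj]) simp
  also have "\<dots> = (\<integral>\<^sup>+x. e2ennreal \<bar>f x\<bar> * indicator ?D x \<partial>M)"
    by (rule nn_integral_indicator_finite[symmetric]) (use S in auto)
  also have "\<dots> \<le> (\<integral>\<^sup>+x. e2ennreal \<bar>f x\<bar> \<partial>M)"
    by (intro nn_integral_mono) (auto simp: indicator_def)
  finally show ?thesis .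
qed



lemma A_sum: "x \<in> A m \<Longrightarrow> fst x + fst (snd x) + snd (snd x) = 3*m+1"
  by (auto simp: A_def)

lemma cost_nonA: "(\<And>m. x \<in> A m \<Longrightarrow> False) \<Longrightarrow> cost x = 0"
  by (auto simp: cost_def)

lemma not_A_diag: "(n,n,n) \<in> A m \<Longrightarrow> False"
  using A_sum[of "(n,n,n)" m] by simp presburger

lemma not_A_B: "(n,n+1,n+1) \<in> A m \<Longrightarrow> False" "(n+1,n,n+1) \<in> A m \<Longrightarrow> False" "(n+1,n+1,n) \<in> A m \<Longrightarrow> False"
  using A_sum[of "(n,n+1,n+1)" m] A_sum[of "(n+1,n,n+1)" m] A_sum[of "(n+1,n+1,n)" m] by simp_all presburger+

lemma m_le_w: assumes "n \<ge> 1" "x \<in> A n" shows "(1 - a0) * (2 / (pi * real n)^2) \<le> w x"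
  using w_A[OF assms] a0_pos by simp

lemma no_maximizer:
  assumes adm: "dual_admissible mu f12 f13 f23"
    and mx: "\<And>g12 g13 g23. dual_admissible mu g12 g13 g23 \<Longrightarrow> dual_value mu g12 g13 g23 \<le> dual_value mu f12 f13 f23"
  shows False
proof -
  define G where "G x = real_of_ereal (f12 (pr12 x)) + real_of_ereal (f13 (pr13 x)) + real_of_ereal (f23 (pr23 x))" for x
  have FG: "x \<in> pos3 \<Longrightarrow> Ff f12 f13 f23 x = ereal (G x)" for x unfolding G_def by (rule Ff_real[OF adm])
  have G_nonA: "G x \<le> 0" if xp: "x \<in> pos3" and xn: "\<And>m. x \<in> A m \<Longrightarrow> False" for x
  proof -
    have "cost x = 0" using xn by (rule cost_nonA)
    thus ?thesis using Ff_le_cost[OF adm xp] FG[OF xp] by simp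
  qed
  have G_A: "G (n,n,n+1) = 1" "G (n+1,n,n) = 1" "G (n,n+1,n) = 1" if "n \<ge> 1" for n
    using slack_all[OF adm mx that] FG[of "(n,n,n+1)"] FG[of "(n+1,n,n)"] FG[of "(n,n+1,n)"] that
    by (auto simp: pos3_def one_ereal_def)
  have cube: "G (n+1,n,n) + G (n,n+1,n) + G (n,n,n+1) + G (n+1,n+1,n+1)
      = G (n,n,n) + G (n,n+1,n+1) + G (n+1,n,n+1) + G (n+1,n+1,n)" for n
    by (simp add: G_def)
  have stepG: "G (n+1,n+1,n+1) \<le> G (n,n,n) - 3" if n: "n \<ge> 1" for n
  proof -
    have "G (n,n+1,n+1) \<le> 0" by (rule G_nonA) (use n in \<open>simp add: pos3_def\<close>, erule not_A_B(1))
    moreover have "G (n+1,n,n+1) \<le> 0" by (rule G_nonA) (use n in \<open>simp add: pos3_def\<close>, erule not_A_B(2))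
    moreover have "G (n+1,n+1,n) \<le> 0" by (rule G_nonA) (use n in \<open>simp add: pos3_def\<close>, erule not_A_B(3))
    ultimately
    show ?thesis using cube[of n] G_A[OF n] by linarith
  qed
  have diag: "G (n,n,n) \<le> - 3 * (real n - 1)" if "n \<ge> 1" for n
    using that
  proof (induction n rule: dec_induct)
    case base
    show ?case using G_nonA[of "(1,1,1)"] not_A_diag[of 1] by (auto simp: pos3_def)
  next
    case (step k)
    thus ?case using stepG[of k] by simp
  qed
  define m where "m n = (1 - a0) * (2 / (pi * real n)^2)" for n :: nat
  have m0: "m n \<ge> 0" for n using a0_lt1 by (simp add: m_def)
  have L: "ereal_L1 (marg12 mu) f12" "ereal_L1 (marg13 mu) f13" "ereal_L1 (marg23 mu) f23"
    using adm by (auto simp: dual_admissible_def)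
  have mm12: "emeasure (marg12 mu) {(n,n)} \<ge> ennreal (m n)" if "n \<ge> 1" for n
    using marg_single_ge(1)[of n n "n+1"] m_le_w[OF that, of "(n,n,n+1)"]
    by (simp add: m_def A_def) (meson ennreal_leI order_trans)
  have mm13: "emeasure (marg13 mu) {(n,n)} \<ge> ennreal (m n)" if "n \<ge> 1" for n
    using marg_single_ge(2)[of n "n+1" n] m_le_w[OF that, of "(n,n+1,n)"]
    by (simp add: m_def A_def) (meson ennreal_leI order_trans)
  have mm23: "emeasure (marg23 mu) {(n,n)} \<ge> ennreal (m n)" if "n \<ge> 1" for n
    using marg_single_ge(3)[of "n+1" n n] m_le_w[OF that, of "(n+1,n,n)"]
    by (simp add: m_def A_def) (meson ennreal_leI order_trans)
  define S where "S = (\<integral>\<^sup>+x. e2ennreal \<bar>f12 x\<bar> \<partial>marg12 mu) + (\<integral>\<^sup>+x. e2ennreal \<bar>f13 x\<bar> \<partial>marg13 mu)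
     + (\<integral>\<^sup>+x. e2ennreal \<bar>f23 x\<bar> \<partial>marg23 mu)"
  have Sfin: "S < \<infinity>" using L by (simp add: S_def ereal_L1_def)
  define u where "u n = 3 * (real n - 1) * m n" for n :: nat
  have u0: "u n \<ge> 0" for n
  proof (cases "n = 0")
    case True thus ?thesis by (simp add: u_def m_def)
  next
    case False
    hence "real n - 1 \<ge> 0" by simp
    thus ?thesis unfolding u_def using m0[of n] by simp
  qed
  have ubound: "(\<Sum>n\<in>{1..N}. u n) \<le> enn2real S" for N
  proof -
    have pt: "u n \<le> \<bar>real_of_ereal (f12 (n,n))\<bar> * m n + \<bar>real_of_ereal (f13 (n,n))\<bar> * m n
        + \<bar>real_of_ereal (f23 (n,n))\<bar> * m n" if "n \<in> {1..N}" for n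
    proof -
      have "n \<ge> 1" using that by simp
      hence "G (n,n,n) \<le> - 3 * (real n - 1)" by (rule diag)
      hence "3 * (real n - 1) \<le> \<bar>real_of_ereal (f12 (n,n))\<bar> + \<bar>real_of_ereal (f13 (n,n))\<bar> + \<bar>real_of_ereal (f23 (n,n))\<bar>"
        unfolding G_def using abs_ge_minus_self[of "real_of_ereal (f12 (n,n))"]
          abs_ge_minus_self[of "real_of_ereal (f13 (n,n))"] abs_ge_minus_self[of "real_of_ereal (f23 (n,n))"]
        by (simp only: pr_simps)
      hence "3 * (real n - 1) * m n \<le> (\<bar>real_of_ereal (f12 (n,n))\<bar> + \<bar>real_of_ereal (f13 (n,n))\<bar> + \<bar>real_of_ereal (f23 (n,n))\<bar>) * m n"
        by (intro mult_right_mono m0)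
      thus ?thesis by (simp add: u_def algebra_simps)
    qed
    have "ennreal (\<Sum>n\<in>{1..N}. u n) \<le> ennreal ((\<Sum>n\<in>{1..N}. \<bar>real_of_ereal (f12 (n,n))\<bar> * m n)
       + (\<Sum>n\<in>{1..N}. \<bar>real_of_ereal (f13 (n,n))\<bar> * m n) + (\<Sum>n\<in>{1..N}. \<bar>real_of_ereal (f23 (n,n))\<bar> * m n))"
      by (intro ennreal_leI) (simp only: sum.distrib[symmetric], rule sum_mono, rule pt)
    also have "\<dots> = ennreal (\<Sum>n\<in>{1..N}. \<bar>real_of_ereal (f12 (n,n))\<bar> * m n)
       + ennreal (\<Sum>n\<in>{1..N}. \<bar>real_of_ereal (f13 (n,n))\<bar> * m n) + ennreal (\<Sum>n\<in>{1..N}. \<bar>real_of_ereal (f23 (n,n))\<bar> * m n)"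
    proof -
      have nn: "0 \<le> (\<Sum>n\<in>{1..N}. \<bar>real_of_ereal (f12 (n,n))\<bar> * m n)"
        "0 \<le> (\<Sum>n\<in>{1..N}. \<bar>real_of_ereal (f13 (n,n))\<bar> * m n)"
        "0 \<le> (\<Sum>n\<in>{1..N}. \<bar>real_of_ereal (f23 (n,n))\<bar> * m n)"
        by (intro sum_nonneg mult_nonneg_nonneg abs_ge_zero m0)+
      show ?thesis using nn by (simp only: ennreal_plus add_nonneg_nonneg)
    qed
    also have "\<dots> \<le> S" unfolding S_def
      by (intro add_mono L1_diag_lower[OF L(1) sets_marg(1) mm12 m0] L1_diag_lower[OF L(2) sets_marg(2) mm13 m0]
          L1_diag_lower[OF L(3) sets_marg(3) mm23 m0])
    finally have "ennreal (\<Sum>n\<in>{1..N}. u n) \<le> S" .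
    thus ?thesis using Sfin by (metis enn2real_ennreal enn2real_mono sum_nonneg u0 infinity_ennreal_def)
  qed
  have "summable u"
  proof (rule summableI_nonneg_bounded[where x="enn2real S"])
    show "0 \<le> u n" for n by (rule u0)
    show "(\<Sum>i<n. u i) \<le> enn2real S" for n
    proof -
      have "(\<Sum>i<n. u i) \<le> (\<Sum>i\<in>{1..n}. u i)"
      proof -
        have "(\<Sum>i<n. u i) \<le> (\<Sum>i\<in>{..n}. u i)" by (intro sum_mono2) (auto simp: u0)
        also have "{..n} = insert 0 {1..n}" by auto
        hence "(\<Sum>i\<in>{..n}. u i) = (\<Sum>i\<in>{1..n}. u i)" by (simp add: u_def m_def)
        finally show ?thesis .
      qed
      also have "\<dots> \<le> enn2real S" by (rule ubound)
      finally show ?thesis .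
    qed
  qed
  moreover have "\<not> summable (\<lambda>n. inverse (real n))" by (rule not_summable_harmonic)
  moreover have "summable u \<Longrightarrow> summable (\<lambda>n. inverse (real n))"
  proof -
    assume su: "summable u"
    define c where "c = 3 * (1 - a0) / pi^2"
    have c: "c > 0" using a0_lt1 by (simp add: c_def)
    have "summable (\<lambda>n. u n / c)" using su by (rule summable_divide)
    show ?thesis
    proof (rule summable_comparison_test')
      show "summable (\<lambda>n. u n / c)" using su by (rule summable_divide)
      fix n :: nat assume n: "n \<ge> 2"
      have rn: "real n \<ge> 2" using n by simp
      have "u n / c = 2 * (real n - 1) / real n ^ 2"
        using c rn by (simp add: u_def m_def c_def power_mult_distrib field_simps)
      also have "\<dots> \<ge> inverse (real n)"
        using rn by (simp add: field_simps power2_eq_square)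
      finally show "norm (inverse (real n)) \<le> u n / c" by simp
    qed
  qed
  ultimately show False by blast
qed



abbreviation "nu \<equiv> marg1 mu \<Otimes>\<^sub>M (marg2 mu \<Otimes>\<^sub>M marg3 mu)"

lemma sets_nu: "sets nu = UNIV"
proof -
  have "sets nu = sets (count_space (UNIV::nat set) \<Otimes>\<^sub>M (count_space (UNIV::nat set) \<Otimes>\<^sub>M count_space (UNIV::nat set)))"
    by (intro sets_pair_measure_cong) (simp_all add: marg1_def marg2_def marg3_def)
  also have "\<dots> = sets (count_space (UNIV::(nat\<times>nat\<times>nat) set))"
  proof -
    have e1: "count_space (UNIV::nat set) \<Otimes>\<^sub>M count_space (UNIV::nat set) = count_space UNIV"
      using pair_measure_countable[of "UNIV::nat set" "UNIV::nat set"] by simp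
    have e2: "count_space (UNIV::nat set) \<Otimes>\<^sub>M count_space (UNIV::(nat\<times>nat) set) = count_space UNIV"
      using pair_measure_countable[of "UNIV::nat set" "UNIV::(nat\<times>nat) set"] by simp
    show ?thesis by (simp only: e1 e2)
  qed
  finally show ?thesis by simp
qed

lemma space_nu: "space nu = UNIV" by (simp add: space_pair_measure)

lemma sets23: "sets (marg2 mu \<Otimes>\<^sub>M marg3 mu) = UNIV"
proof -
  have "sets (marg2 mu \<Otimes>\<^sub>M marg3 mu) = sets (count_space (UNIV::nat set) \<Otimes>\<^sub>M count_space (UNIV::nat set))"
    by (intro sets_pair_measure_cong) (simp_all add: marg2_def marg3_def)
  also have "count_space (UNIV::nat set) \<Otimes>\<^sub>M count_space (UNIV::nat set) = count_space UNIV"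
    using pair_measure_countable[of "UNIV::nat set" "UNIV::nat set"] by simp
  finally show ?thesis by simp
qed

lemma sigma_finite_marg: "sigma_finite_measure (marg1 mu)" "sigma_finite_measure (marg2 mu)" "sigma_finite_measure (marg3 mu)"
  using finite_marg unfolding finite_measure_def by auto

lemma nu_single: "emeasure nu {(a,b,c)} = emeasure (marg1 mu) {a} * (emeasure (marg2 mu) {b} * emeasure (marg3 mu) {c})"
proof -
  interpret S23: sigma_finite_measure "marg2 mu \<Otimes>\<^sub>M marg3 mu"
    by (intro sigma_finite_pair_measure sigma_finite_marg)
  interpret S3: sigma_finite_measure "marg3 mu" by (rule sigma_finite_marg)
  have e: "{(a,b,c)} = {a} \<times> ({b} \<times> {c})" by auto
  have bc: "{b} \<times> {c} \<in> sets (marg2 mu \<Otimes>\<^sub>M marg3 mu)" by (intro pair_measureI) auto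
  have "emeasure nu ({a} \<times> ({b} \<times> {c})) = emeasure (marg1 mu) {a} * emeasure (marg2 mu \<Otimes>\<^sub>M marg3 mu) ({b} \<times> {c})"
    by (rule S23.emeasure_pair_measure_Times) (simp_all add: sets23)
  also have "emeasure (marg2 mu \<Otimes>\<^sub>M marg3 mu) ({b} \<times> {c}) = emeasure (marg2 mu) {b} * emeasure (marg3 mu) {c}"
    by (rule S3.emeasure_pair_measure_Times) auto
  finally show ?thesis by (simp only: e)
qed

lemma null_iff_singletons:
  fixes M :: "(nat\<times>nat\<times>nat) measure"
  assumes S: "sets M = UNIV"
  shows "E \<in> null_sets M \<longleftrightarrow> (\<forall>x\<in>E. emeasure M {x} = 0)"
proof -
  have "emeasure M E = (\<integral>\<^sup>+x. emeasure M {x} \<partial>count_space E)"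
    by (rule emeasure_countable_singleton) (auto simp: S)
  also have "\<dots> = 0 \<longleftrightarrow> (\<forall>x\<in>E. emeasure M {x} = 0)"
    by (simp add: nn_integral_0_iff_AE AE_count_space)
  finally show ?thesis using S by (simp add: null_sets_def)
qed

lemma marg_zero: "emeasure (marg1 mu) {0} = 0" "emeasure (marg2 mu) {0} = 0" "emeasure (marg3 mu) {0} = 0"
proof -
  have z: "E \<inter> pos3 = {} \<Longrightarrow> emeasure mu E = 0" for E
  proof -
    assume h: "E \<inter> pos3 = {}"
    have "\<forall>x. ennreal (w x) * indicator E x = 0"
    proof
      fix x show "ennreal (w x) * indicator E x = 0"
      proof (cases "x \<in> E")
        case True hence "x \<notin> pos3" using h by auto
        thus ?thesis by (simp add: w_zero)
      qed simp
    qed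
    hence "(\<lambda>x. ennreal (w x) * indicator E x) = (\<lambda>x. 0)" by (intro ext) blast
    thus ?thesis unfolding emeasure_mu by (simp only:) simp
  qed
  show "emeasure (marg1 mu) {0} = 0" "emeasure (marg2 mu) {0} = 0" "emeasure (marg3 mu) {0} = 0"
    by (auto simp: emeasure_marg intro!: z simp: pos3_def pr1_def pr2_def pr3_def)
qed

lemma marg_pos: assumes "k \<ge> 1"
  shows "emeasure (marg1 mu) {k} > 0" "emeasure (marg2 mu) {k} > 0" "emeasure (marg3 mu) {k} > 0"
proof -
  have p: "w (k,1,1) > 0" "w (1,k,1) > 0" "w (1,1,k) > 0" using assms by (auto intro!: w_pos simp: pos3_def)
  have "emeasure (marg1 mu) {k} \<ge> emeasure mu {(k,1,1)}" unfolding emeasure_marg by (intro emeasure_mono) auto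
  thus "emeasure (marg1 mu) {k} > 0" using p(1) by (simp add: emeasure_mu_single) (meson ennreal_less_zero_iff order_less_le_trans)
  have "emeasure (marg2 mu) {k} \<ge> emeasure mu {(1,k,1)}" unfolding emeasure_marg by (intro emeasure_mono) auto
  thus "emeasure (marg2 mu) {k} > 0" using p(2) by (simp add: emeasure_mu_single) (meson ennreal_less_zero_iff order_less_le_trans)
  have "emeasure (marg3 mu) {k} \<ge> emeasure mu {(1,1,k)}" unfolding emeasure_marg by (intro emeasure_mono) auto
  thus "emeasure (marg3 mu) {k} > 0" using p(3) by (simp add: emeasure_mu_single) (meson ennreal_less_zero_iff order_less_le_trans)
qed

lemma nu_zero_iff: "emeasure nu {x} = 0 \<longleftrightarrow> x \<notin> pos3"
proof -
  obtain a b c where x: "x = (a,b,c)" by (cases x)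
  have m1: "emeasure (marg1 mu) {a} = 0 \<longleftrightarrow> a = 0" using marg_zero(1) marg_pos(1)[of a]
    by (cases "a = 0") auto
  have m2: "emeasure (marg2 mu) {b} = 0 \<longleftrightarrow> b = 0" using marg_zero(2) marg_pos(2)[of b]
    by (cases "b = 0") auto
  have m3: "emeasure (marg3 mu) {c} = 0 \<longleftrightarrow> c = 0" using marg_zero(3) marg_pos(3)[of c]
    by (cases "c = 0") auto
  show ?thesis unfolding x nu_single using m1 m2 m3 by (auto simp: pos3_def)
qed

lemma mu_zero_iff: "emeasure mu {x} = 0 \<longleftrightarrow> x \<notin> pos3"
  using w_zero[of x] w_pos[of x] by (auto simp: emeasure_mu_single)

lemma equiv_part: "equiv_measures mu nu"
  unfolding equiv_measures_def absolutely_continuous_def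
  by (auto simp: null_iff_singletons sets_nu mu_zero_iff nu_zero_iff)



lemma int_single: "(\<integral>\<^sup>+a. ennreal (ee a * indicator {k} a) \<partial>count_space UNIV) = ennreal (ee k)"
proof -
  have "(\<integral>\<^sup>+a. ennreal (ee a * indicator {k} a) \<partial>count_space UNIV) = (\<integral>\<^sup>+a. ennreal (ee k) * indicator {k} a \<partial>count_space UNIV)"
    by (intro nn_integral_cong) (auto simp: indicator_def)
  also have "\<dots> = ennreal (ee k)" by (simp add: nn_integral_cmult_indicator)
  finally show ?thesis .
qed

lemma weps_marg:
  "(\<integral>\<^sup>+x. ennreal (weps x) * indicator (pr1 -` {k}) x \<partial>count_space UNIV) = ennreal (ee k)"
  "(\<integral>\<^sup>+x. ennreal (weps x) * indicator (pr2 -` {k}) x \<partial>count_space UNIV) = ennreal (ee k)"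
  "(\<integral>\<^sup>+x. ennreal (weps x) * indicator (pr3 -` {k}) x \<partial>count_space UNIV) = ennreal (ee k)"
proof -
  have ind: "indicator {k} j = (if j = k then 1 else 0 :: real)" for j by (simp add: indicator_def)
  have "(\<integral>\<^sup>+x. ennreal (weps x) * indicator (pr1 -` {k}) x \<partial>count_space UNIV)
     = (\<integral>\<^sup>+x. ennreal ((ee (fst x) * indicator {k} (fst x)) * ee (fst (snd x)) * ee (snd (snd x))) \<partial>count_space UNIV)"
    by (intro nn_integral_cong) (auto simp: weps_split pr1_def indicator_def)
  also have "\<dots> = ennreal (ee k)" by (subst nn_integral_prod3) (auto simp: ee_nonneg int_ee int_single)
  finally show "(\<integral>\<^sup>+x. ennreal (weps x) * indicator (pr1 -` {k}) x \<partial>count_space UNIV) = ennreal (ee k)" .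
  have "(\<integral>\<^sup>+x. ennreal (weps x) * indicator (pr2 -` {k}) x \<partial>count_space UNIV)
     = (\<integral>\<^sup>+x. ennreal (ee (fst x) * (ee (fst (snd x)) * indicator {k} (fst (snd x))) * ee (snd (snd x))) \<partial>count_space UNIV)"
    by (intro nn_integral_cong) (auto simp: weps_split pr2_def indicator_def)
  also have "\<dots> = ennreal (ee k)" by (subst nn_integral_prod3) (auto simp: ee_nonneg int_ee int_single)
  finally show "(\<integral>\<^sup>+x. ennreal (weps x) * indicator (pr2 -` {k}) x \<partial>count_space UNIV) = ennreal (ee k)" .
  have "(\<integral>\<^sup>+x. ennreal (weps x) * indicator (pr3 -` {k}) x \<partial>count_space UNIV)
     = (\<integral>\<^sup>+x. ennreal (ee (fst x) * ee (fst (snd x)) * (ee (snd (snd x)) * indicator {k} (snd (snd x)))) \<partial>count_space UNIV)"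
    by (intro nn_integral_cong) (auto simp: weps_split pr3_def indicator_def)
  also have "\<dots> = ennreal (ee k)" by (subst nn_integral_prod3) (auto simp: ee_nonneg int_ee int_single)
  finally show "(\<integral>\<^sup>+x. ennreal (weps x) * indicator (pr3 -` {k}) x \<partial>count_space UNIV) = ennreal (ee k)" .
qed

lemma ee_le: "k \<ge> 1 \<Longrightarrow> ee k \<le> 8 / real k ^ 2"
proof -
  assume k: "k \<ge> 1"
  have "real ((k+1)^3) \<le> real (8 * 2^k)" using cube_pow[of k] by linarith
  hence c: "real (k+1)^3 \<le> 8 * 2^k" by simp
  have "real k ^ 2 \<le> real (k+1)^3"
  proof -
    have "real k ^ 2 \<le> real (k+1) ^ 2" by (intro power_mono) auto
    also have "\<dots> \<le> real (k+1)^3" by (intro power_increasing) auto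
    finally show ?thesis .
  qed
  hence "real k ^ 2 \<le> 8 * 2^k" using c by linarith
  hence "real k ^ 2 * (1/2)^k \<le> 8" by (simp add: field_simps power_one_over)
  thus ?thesis using k by (simp add: ee_def field_simps)
qed

lemma pi_sq_ge9: "pi^2 \<ge> (9::real)"
proof -
  have "3 * 3 \<le> pi * pi" by (intro mult_mono) (use pi_gt3 in auto)
  thus ?thesis by (simp add: power2_eq_square)
qed

lemma two_pi: "2 / pi^2 \<le> (2/9::real)"
  by (rule divide_left_mono) (use pi_sq_ge9 in auto)

lemma cc_le: "k \<ge> 1 \<Longrightarrow> cc k \<le> 1 / real k ^ 2" "k \<ge> 1 \<Longrightarrow> cc (k - 1) \<le> 1 / real k ^ 2"
proof -
  assume k: "k \<ge> 1"
  have rk: "real k \<ge> 1" using k by simp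
  have "cc k = (2/pi^2) * inverse (real k ^ 2)" by (rule cc_eq)
  also have "\<dots> \<le> 1 * inverse (real k ^ 2)"
  proof (rule mult_right_mono)
    show "2/pi^2 \<le> 1" using two_pi by linarith
  qed simp
  finally show "cc k \<le> 1 / real k ^ 2" by (simp add: divide_inverse)
  show "cc (k - 1) \<le> 1 / real k ^ 2"
  proof (cases "k = 1")
    case True thus ?thesis by (simp add: cc_def)
  next
    case False
    hence k2: "real k \<ge> 2" using k by simp
    have e: "real (k - 1) = real k - 1" using k by simp
    have a: "real k \<le> 2 * (real k - 1)" using k2 by simp
    have "real k ^ 2 \<le> (2 * (real k - 1))^2" by (intro power_mono a) simp
    hence b: "inverse ((real k - 1)^2) \<le> 4 * inverse (real k ^ 2)"
      using k2 by (simp add: field_simps power2_eq_square)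
    have "cc (k - 1) = (2/pi^2) * inverse ((real k - 1) ^ 2)" by (simp only: cc_eq e)
    also have "\<dots> \<le> (2/9) * (4 * inverse (real k ^ 2))"
      by (intro mult_mono two_pi b) auto
    also have "\<dots> \<le> 1 / real k ^ 2"
    proof -
      have q: "inverse (real k ^ 2) \<ge> 0" by simp
      have "1 / real k ^ 2 = inverse (real k ^ 2)" by (simp add: inverse_eq_divide)
      thus ?thesis using q by linarith
    qed
    finally show ?thesis .
  qed
qed



lemma marg_upper_gen:
  assumes k: "k \<ge> 1" and hE: "\<And>m. m \<noteq> k - 1 \<Longrightarrow> m \<noteq> k \<Longrightarrow> A m \<inter> E = {}"
    and hw: "(\<integral>\<^sup>+x. ennreal (weps x) * indicator E x \<partial>count_space UNIV) = ennreal (ee k)"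
  shows "emeasure mu E \<le> ennreal (14 / real k ^ 2)"
proof -
  have "emeasure mu E = (\<integral>\<^sup>+x. ennreal (w x) * indicator E x \<partial>count_space UNIV)"
    by (simp add: emeasure_mu)
  also have "\<dots> \<le> (\<integral>\<^sup>+x. ennreal (wp x) * indicator E x + ennreal (weps x) * indicator E x \<partial>count_space UNIV)"
    by (intro nn_integral_mono) (auto simp: indicator_def w_le wp_nonneg weps_nonneg simp flip: ennreal_plus)
  also have "\<dots> = (\<integral>\<^sup>+x. ennreal (wp x) * indicator E x \<partial>count_space UNIV)
       + (\<integral>\<^sup>+x. ennreal (weps x) * indicator E x \<partial>count_space UNIV)"
    by (simp add: nn_integral_add)
  also have "(\<integral>\<^sup>+x. ennreal (wp x) * indicator E x \<partial>count_space UNIV) \<le> ennreal (6 / real k ^ 2)"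
  proof -
    have "(\<integral>\<^sup>+x. ennreal (wp x) * indicator E x \<partial>count_space UNIV)
        = (\<Sum>m. ennreal (cc m) * of_nat (card (A m \<inter> E)))" by (rule int_wp)
    also have "\<dots> = (\<Sum>m\<in>{k-1,k}. ennreal (cc m) * of_nat (card (A m \<inter> E)))"
      by (rule suminf_finite) (use hE in auto)
    also have "\<dots> \<le> (\<Sum>m\<in>{k-1,k}. ennreal (cc m * 3))"
      by (intro sum_mono) (auto simp: ennreal_mult cc_nonneg card_A_le intro!: mult_left_mono)
    also have "\<dots> = ennreal (cc (k-1) * 3) + ennreal (cc k * 3)"
      using k by (subst sum.insert) auto
    also have "\<dots> \<le> ennreal (3 / real k ^ 2) + ennreal (3 / real k ^ 2)"
      using cc_le[OF k] by (intro add_mono ennreal_leI) auto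
    also have "\<dots> = ennreal (6 / real k ^ 2)" by (simp flip: ennreal_plus)
    finally show ?thesis .
  qed
  also have "(\<integral>\<^sup>+x. ennreal (weps x) * indicator E x \<partial>count_space UNIV) \<le> ennreal (8 / real k ^ 2)"
    unfolding hw using ee_le[OF k] by (intro ennreal_leI)
  finally have "emeasure mu E \<le> ennreal (6 / real k ^ 2) + ennreal (8 / real k ^ 2)" by simp
  also have "\<dots> = ennreal (14 / real k ^ 2)" by (simp flip: ennreal_plus)
  finally show ?thesis .
qed

lemma marg_upper:
  assumes k: "k \<ge> 1"
  shows "emeasure (marg1 mu) {k} \<le> ennreal (14 / real k ^ 2)"
    "emeasure (marg2 mu) {k} \<le> ennreal (14 / real k ^ 2)"
    "emeasure (marg3 mu) {k} \<le> ennreal (14 / real k ^ 2)"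
  unfolding emeasure_marg
  by (rule marg_upper_gen[OF k _ weps_marg(1)] marg_upper_gen[OF k _ weps_marg(2)] marg_upper_gen[OF k _ weps_marg(3)];
      auto simp: A_def pr1_def pr2_def pr3_def)+



lemma density_single:
  assumes f: "f \<in> borel_measurable M" and x: "{x} \<in> sets M"
  shows "emeasure (density M f) {x} = f x * emeasure M {x}"
proof -
  have "emeasure (density M f) {x} = (\<integral>\<^sup>+y. f y * indicator {x} y \<partial>M)"
    by (rule emeasure_density[OF f x])
  also have "\<dots> = (\<integral>\<^sup>+y. f x * indicator {x} y \<partial>M)"
    by (intro nn_integral_cong) (auto simp: indicator_def)
  also have "\<dots> = f x * emeasure M {x}" by (rule nn_integral_cmult_indicator[OF x])
  finally show ?thesis .
qed

lemma unif_bound: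
  assumes "unif_equiv_measures mu nu"
  shows "\<exists>K>0. \<forall>x. emeasure mu {x} \<le> ennreal K * emeasure nu {x}"
  using assms unfolding unif_equiv_measures_def
proof
  assume "bounded_density mu nu"
  then obtain g a b where g: "0 < a" "a \<le> b" "g \<in> borel_measurable nu" "\<forall>x\<in>space nu. a \<le> g x \<and> g x \<le> b"
    "mu = density nu (\<lambda>x. ennreal (g x))" unfolding bounded_density_def by blast
  have gm: "(\<lambda>x. ennreal (g x)) \<in> borel_measurable nu" using g(3) by measurable
  show ?thesis
  proof (intro exI[of _ b] conjI allI)
    show "b > 0" using g by simp
    fix x
    have bx: "g x \<le> b" using bspec[OF g(4), of x] space_nu by simp
    have "emeasure mu {x} = ennreal (g x) * emeasure nu {x}"
      by (subst g(5)) (rule density_single[OF gm], simp add: sets_nu)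
    also have "\<dots> \<le> ennreal b * emeasure nu {x}"
      using bx by (intro mult_right_mono ennreal_leI) simp_all
    finally show "emeasure mu {x} \<le> ennreal b * emeasure nu {x}" .
  qed
next
  assume "bounded_density nu mu"
  then obtain g a b where g: "0 < a" "a \<le> b" "g \<in> borel_measurable mu" "\<forall>x\<in>space mu. a \<le> g x \<and> g x \<le> b"
    "nu = density mu (\<lambda>x. ennreal (g x))" unfolding bounded_density_def by blast
  have gm: "(\<lambda>x. ennreal (g x)) \<in> borel_measurable mu" using g(3) by measurable
  show ?thesis
  proof (intro exI[of _ "1/a"] conjI allI)
    show "1/a > 0" using g by simp
    fix x
    have ax: "a \<le> g x" using bspec[OF g(4), of x] by simp
    have "emeasure nu {x} = ennreal (g x) * emeasure mu {x}"
      by (subst g(5)) (rule density_single[OF gm], simp)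
    also have "\<dots> \<ge> ennreal a * emeasure mu {x}"
      using ax by (intro mult_right_mono ennreal_leI) simp_all
    finally have h: "ennreal a * emeasure mu {x} \<le> emeasure nu {x}" .
    have "emeasure mu {x} = ennreal (1/a) * (ennreal a * emeasure mu {x})"
      using g(1) by (simp add: mult.assoc[symmetric] ennreal_mult[symmetric])
    also have "\<dots> \<le> ennreal (1/a) * emeasure nu {x}" by (intro mult_left_mono h) simp
    finally show "emeasure mu {x} \<le> ennreal (1/a) * emeasure nu {x}" .
  qed
qed



lemma nonunif: "\<not> unif_equiv_measures mu nu"
proof
  assume "unif_equiv_measures mu nu"
  then obtain K where K: "K > 0" "\<And>x. emeasure mu {x} \<le> ennreal K * emeasure nu {x}"
    using unif_bound by blast
  define n where "n = nat \<lceil>24696 * K\<rceil> + 1"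
  have n1: "n \<ge> 1" by (simp add: n_def)
  have nK: "real n > 24696 * K"
  proof -
    have "real (nat \<lceil>24696 * K\<rceil>) \<ge> 24696 * K" by (rule real_nat_ceiling_ge)
    thus ?thesis by (simp add: n_def)
  qed
  define q where "q = real n"
  have q1: "q \<ge> 1" using n1 by (simp add: q_def)
  have "emeasure nu {(n,n,n+1)} = emeasure (marg1 mu) {n} * (emeasure (marg2 mu) {n} * emeasure (marg3 mu) {n+1})"
    by (rule nu_single)
  also have "\<dots> \<le> ennreal (14 / real n ^ 2) * (ennreal (14 / real n ^ 2) * ennreal (14 / real (n+1) ^ 2))"
    by (intro mult_mono marg_upper n1) auto
  also have "\<dots> = ennreal (14 / q ^ 2 * (14 / q ^ 2 * (14 / real (n+1) ^ 2)))"
  proof -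
    have nn: "0 \<le> 14 / q^2" "0 \<le> 14 / real (n+1) ^ 2" by simp_all
    have e1: "ennreal (14 / q ^ 2) * ennreal (14 / real (n+1) ^ 2) = ennreal (14 / q ^ 2 * (14 / real (n+1) ^ 2))"
      using nn by (rule ennreal_mult[symmetric])
    have e2: "ennreal (14 / q ^ 2) * ennreal (14 / q ^ 2 * (14 / real (n+1) ^ 2)) = ennreal (14 / q ^ 2 * (14 / q ^ 2 * (14 / real (n+1) ^ 2)))"
      using nn by (intro ennreal_mult[symmetric]) auto
    show ?thesis unfolding q_def[symmetric] e1 e2 ..
  qed
  finally have nub: "emeasure nu {(n,n,n+1)} \<le> ennreal (14 / q ^ 2 * (14 / q ^ 2 * (14 / real (n+1) ^ 2)))" .
  have "ennreal (w (n,n,n+1)) \<le> ennreal K * emeasure nu {(n,n,n+1)}"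
    using K(2)[of "(n,n,n+1)"] by (simp add: emeasure_mu_single)
  also have "\<dots> \<le> ennreal K * ennreal (14 / q ^ 2 * (14 / q ^ 2 * (14 / real (n+1) ^ 2)))"
    by (intro mult_left_mono nub) simp
  also have "\<dots> = ennreal (K * (14 / q ^ 2 * (14 / q ^ 2 * (14 / real (n+1) ^ 2))))"
    by (rule ennreal_mult[symmetric]) (use K(1) in simp_all)
  finally have wle: "w (n,n,n+1) \<le> K * (14 / q ^ 2 * (14 / q ^ 2 * (14 / real (n+1) ^ 2)))"
    using K(1) by (subst (asm) ennreal_le_iff) (auto intro!: mult_nonneg_nonneg)
  define u where "u = 1 / q^2"
  have u0: "u > 0" using q1 by (simp add: u_def)
  have "(1 - a0) * (2 / (pi * q)^2) \<le> w (n,n,n+1)"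
    using m_le_w[OF n1, of "(n,n,n+1)"] by (simp add: A_def q_def)
  moreover have "(1 - a0) * (2 / (pi * q)^2) \<ge> u / 9"
  proof -
    have e: "2 / (pi * q)^2 = (2 / pi^2) * u" by (simp add: u_def power_mult_distrib)
    have p8: "2 / pi^2 \<ge> (1/8::real)"
      using pi_sq_le by (simp add: divide_simps)
    have "(1/8) * u \<le> (2 / pi^2) * u" by (rule mult_right_mono[OF p8]) (use u0 in simp)
    hence "2 / (pi * q)^2 \<ge> (1/8) * u" by (simp only: e)
    moreover have "1 - a0 \<ge> 8/9" by (simp add: a0_def)
    ultimately have "(1 - a0) * (2 / (pi * q)^2) \<ge> (8/9) * ((1/8) * u)"
      by (intro mult_mono) (use u0 in auto)
    thus ?thesis by simp
  qed
  moreover have "K * (14 / q ^ 2 * (14 / q ^ 2 * (14 / real (n+1) ^ 2))) \<le> 2744 * K * u^2"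
  proof -
    have "14 / real (n+1) ^ 2 \<le> (14::real)" by (simp add: divide_simps)
    hence "14 / q ^ 2 * (14 / q ^ 2 * (14 / real (n+1) ^ 2)) \<le> 14 / q ^ 2 * (14 / q ^ 2 * 14)"
      by (intro mult_left_mono) auto
    also have "\<dots> = 2744 * u^2" by (simp add: u_def power2_eq_square)
    finally have X: "14 / q ^ 2 * (14 / q ^ 2 * (14 / real (n+1) ^ 2)) \<le> 2744 * u^2" .
    have "K * (14 / q ^ 2 * (14 / q ^ 2 * (14 / real (n+1) ^ 2))) \<le> K * (2744 * u^2)"
      by (rule mult_left_mono[OF X]) (use K(1) in simp)
    thus ?thesis by (simp only: mult_ac)
  qed
  ultimately have "u / 9 \<le> 2744 * K * u^2" using wle by linarith
  hence "1 \<le> 24696 * K * u" using u0 by (simp add: power2_eq_square field_simps)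
  hence "q^2 \<le> 24696 * K" using q1 by (simp add: u_def field_simps)
  moreover have "q \<le> q^2" using q1 by (simp add: power2_eq_square)
  ultimately show False using nK unfolding q_def by linarith
qed

theorem mainTheorem13:
  shows "\<exists>\<alpha>0::real. 0 < \<alpha>0 \<and> \<alpha>0 < 1 \<and>
    (let \<mu> = mu_mix \<alpha>0;
         \<nu> = marg1 \<mu> \<Otimes>\<^sub>M (marg2 \<mu> \<Otimes>\<^sub>M marg3 \<mu>)
     in equiv_measures \<mu> \<nu> \<and> \<not> unif_equiv_measures \<mu> \<nu> \<and>
        \<not> (\<exists>f12 f13 f23. dual_admissible \<mu> f12 f13 f23 \<and>
             (\<forall>g12 g13 g23. dual_admissible \<mu> g12 g13 g23 \<longrightarrow>
                dual_value \<mu> g12 g13 g23 \<le> dual_value \<mu> f12 f13 f23)))"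
proof (intro exI[of _ a0] conjI)
  show "0 < a0" by (rule a0_pos)
  show "a0 < 1" by (rule a0_lt1)
  show "let \<mu> = mu_mix a0;
         \<nu> = marg1 \<mu> \<Otimes>\<^sub>M (marg2 \<mu> \<Otimes>\<^sub>M marg3 \<mu>)
     in equiv_measures \<mu> \<nu> \<and> \<not> unif_equiv_measures \<mu> \<nu> \<and>
        \<not> (\<exists>f12 f13 f23. dual_admissible \<mu> f12 f13 f23 \<and>
             (\<forall>g12 g13 g23. dual_admissible \<mu> g12 g13 g23 \<longrightarrow>
                dual_value \<mu> g12 g13 g23 \<le> dual_value \<mu> f12 f13 f23))"
    unfolding Let_def
    using equiv_part nonunif no_maximizer by blast
qed


end
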